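(* Let $G$ be a closed and continuous cyclic graph with $\mathrm{wf}(G)=\frac pq$ ($p,q$ coprime). For every $v\in V$ and $i\ge0$: (i) $(f_i(v))^*=f_i(v^* )$; (ii) $f_i(v^* )=v^*$ if and only if $i$ is a multiple of $q$.
   Context: $S^1=\mathbb{R}/\mathbb{Z}$; $\preceq$/$\prec$ clockwise order; $\vec d(p,q)\in[0,1)$ clockwise distance. A directed graph (no loops, no opposite edges) with vertex set $V\subseteq S^1$ is cyclic if whenever $v\to u$ is an edge, $v\to w$ and $w\to u$ are edges for all $w\in V$ with $v\prec w\prec u\prec v$; $N^+[G,v]=\{v\}\cup\{w:v\to w\}$. Winding fraction $\mathrm{wf}$: for finite $G$, $\sup\{k/n:\exists$ cyclic homomorphism $C_n^k\to G\}$ ($C_n^k$: vertices $0..n-1$, edges $i\to i+s\bmod n$, $1\le s\le k<n/2$); in general the supremum over finite induced subgraphs. For $m\ge1$, $\gamma_m(v_0)=\sup\{\sum_{i=0}^{m-1}\vec d(v_i,v_{i+1}):v_{i+1}\in N^+[G,v_i]\}$, $\gamma_0=0$, $f_m(v)=(v+\gamma_m(v))\bmod1$. $G$ is closed if $V$ is closed in $S^1$, continuous if all $\gamma_m$ are continuous; then $f_m(V)\subseteq V$. For $v\in V$, $v^*=\lim_{m\to\infty}f_{mq}(v)$ (this limit exists and lies in $V$). *)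

theory Defs
  imports Complex_Main "HOL-Computational_Algebra.Primes"
begin

text \<open>The circle S^1 = R/Z is represented by the interval [0,1); a point of S^1 is
  its representative in [0,1). Clockwise = increasing direction (mod 1).\<close>

definition dcw :: "real \<Rightarrow> real \<Rightarrow> real" where
  "dcw p q = frac (q - p)"

text \<open>v \<prec> w \<prec> u \<prec> v (strict cyclic betweenness)\<close>
definition cbetween :: "real \<Rightarrow> real \<Rightarrow> real \<Rightarrow> bool" where
  "cbetween v w u \<longleftrightarrow> 0 < dcw v w \<and> dcw v w < dcw v u"

definition digraph_on :: "real set \<Rightarrow> (real \<Rightarrow> real \<Rightarrow> bool) \<Rightarrow> bool" where
  "digraph_on V E \<longleftrightarrow> V \<subseteq> {0..<1} \<and> (\<forall>v u. E v u \<longrightarrow> v \<in> V \<and> u \<in> V)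
     \<and> (\<forall>v. \<not> E v v) \<and> (\<forall>v u. E v u \<longrightarrow> \<not> E u v)"

definition cyclic_graph :: "real set \<Rightarrow> (real \<Rightarrow> real \<Rightarrow> bool) \<Rightarrow> bool" where
  "cyclic_graph V E \<longleftrightarrow> digraph_on V E \<and>
     (\<forall>v u. E v u \<longrightarrow> (\<forall>w\<in>V. cbetween v w u \<longrightarrow> E v w \<and> E w u))"

definition Nplus :: "(real \<Rightarrow> real \<Rightarrow> bool) \<Rightarrow> real \<Rightarrow> real set" where
  "Nplus E v = insert v {w. E v w}"

text \<open>Cyclic homomorphism C_n^k \<rightarrow> G: a homomorphism (edges i \<rightarrow> i+s mod n, 1 \<le> s \<le> k)
  whose image winds around the circle exactly once.\<close>
definition cyc_hom :: "nat \<Rightarrow> nat \<Rightarrow> (real \<Rightarrow> real \<Rightarrow> bool) \<Rightarrow> (nat \<Rightarrow> real) \<Rightarrow> bool" where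
  "cyc_hom n k E h \<longleftrightarrow> 1 \<le> k \<and> 2 * k < n \<and>
     (\<forall>i<n. \<forall>s. 1 \<le> s \<and> s \<le> k \<longrightarrow> E (h i) (h ((i + s) mod n))) \<and>
     (\<Sum>i<n. dcw (h i) (h ((i + 1) mod n))) = 1"

definition wf_fin :: "(real \<Rightarrow> real \<Rightarrow> bool) \<Rightarrow> real" where
  "wf_fin E = (let S = {real k / real n | k n. \<exists>h. cyc_hom n k E h}
               in if S = {} then 0 else Sup S)"

definition induced :: "(real \<Rightarrow> real \<Rightarrow> bool) \<Rightarrow> real set \<Rightarrow> real \<Rightarrow> real \<Rightarrow> bool" where
  "induced E W = (\<lambda>a b. E a b \<and> a \<in> W \<and> b \<in> W)"

definition wf :: "real set \<Rightarrow> (real \<Rightarrow> real \<Rightarrow> bool) \<Rightarrow> real" where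
  "wf V E = Sup {wf_fin (induced E W) | W. W \<subseteq> V \<and> finite W}"

definition gamma :: "(real \<Rightarrow> real \<Rightarrow> bool) \<Rightarrow> nat \<Rightarrow> real \<Rightarrow> real" where
  "gamma E m v0 = (if m = 0 then 0 else
     Sup {(\<Sum>i<m. dcw (w i) (w (Suc i))) | w.
            w 0 = v0 \<and> (\<forall>i<m. w (Suc i) \<in> Nplus E (w i))})"

definition fmap :: "(real \<Rightarrow> real \<Rightarrow> bool) \<Rightarrow> nat \<Rightarrow> real \<Rightarrow> real" where
  "fmap E m v = frac (v + gamma E m v)"

definition lift :: "real set \<Rightarrow> real set" where
  "lift V = {x + real_of_int k | x k. x \<in> V}"

definition closed_circ :: "real set \<Rightarrow> bool" where
  "closed_circ V \<longleftrightarrow> closed (lift V)"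

text \<open>Continuity of all gamma_m as functions on V with the topology of S^1.\<close>
definition continuous_graph :: "real set \<Rightarrow> (real \<Rightarrow> real \<Rightarrow> bool) \<Rightarrow> bool" where
  "continuous_graph V E \<longleftrightarrow> (\<forall>m. continuous_on (lift V) (\<lambda>x. gamma E m (frac x)))"

definition dcirc :: "real \<Rightarrow> real \<Rightarrow> real" where
  "dcirc x y = min (frac (x - y)) (frac (y - x))"

definition circ_lim :: "(nat \<Rightarrow> real) \<Rightarrow> real" where
  "circ_lim s = (THE y. 0 \<le> y \<and> y < 1 \<and> (\<lambda>m. dcirc (s m) y) \<longlonglongrightarrow> 0)"

definition vstar :: "(real \<Rightarrow> real \<Rightarrow> bool) \<Rightarrow> nat \<Rightarrow> real \<Rightarrow> real" where
  "vstar E q v = circ_lim (\<lambda>m. fmap E (m * q) v)"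

end

theory Submission
  imports Defs "HOL-Analysis.Analysis"
begin


lemma frac_shift_int[simp]: "frac (x + of_int k) = frac x"
  by (simp add: frac_def)

lemma frac_shift_int_diff[simp]: "frac (x - of_int k) = frac x"
  using frac_shift_int[of x "-k"] by simp

lemma dcw_ge0: "0 \<le> dcw a b" by (simp add: dcw_def frac_ge_0)
lemma dcw_lt1: "dcw a b < 1" by (simp add: dcw_def frac_lt_1)
lemma dcw_self[simp]: "dcw a a = 0" by (simp add: dcw_def)

lemma frac_eq_self: "0 \<le> x \<Longrightarrow> x < 1 \<Longrightarrow> frac x = x"
  by (simp add: frac_eq)

lemma frac_eq_iff_diff_int: "frac x = frac y \<longleftrightarrow> (\<exists>k::int. x = y + of_int k)"
proof
  assume "frac x = frac y"
  then have "x = y + of_int (floor x - floor y)" by (simp add: frac_def)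
  then show "\<exists>k::int. x = y + of_int k" by blast
next
  assume "\<exists>k::int. x = y + of_int k"
  then obtain k::int where "x = y + of_int k" by blast
  then show "frac x = frac y" by (simp add: frac_shift_int)
qed

lemma dcw_lift: "dcw (frac x) (frac y) = frac (y - x)"
proof -
  have e: "frac y - frac x = (y - x) + of_int (floor x - floor y)" by (simp add: frac_def)
  show ?thesis unfolding dcw_def e by (rule frac_shift_int)
qed

lemma dcw_lift_eq: "0 \<le> y - x \<Longrightarrow> y - x < 1 \<Longrightarrow> dcw (frac x) (frac y) = y - x"
  by (simp add: dcw_lift frac_eq_self)

lemma dcw_frac_left: "dcw (frac x) u = frac (u - x)"
proof -
  have e: "u - frac x = (u - x) + of_int (floor x)" by (simp add: frac_def)
  show ?thesis unfolding dcw_def e by (rule frac_shift_int)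
qed

lemma frac_pos_step: "0 \<le> u \<Longrightarrow> u < 1 \<Longrightarrow> frac (x + dcw (frac x) u) = u"
proof -
  assume u: "0 \<le> u" "u < 1"
  have "x + dcw (frac x) u = u + of_int (- floor (u - x))"
    by (simp only: dcw_frac_left) (simp add: frac_def)
  then show ?thesis using u by (simp add: frac_shift_int frac_eq_self)
qed

lemma int_between: "(-1::real) < of_int k \<Longrightarrow> of_int k < (1::real) \<Longrightarrow> k = 0"
proof -
  assume "(-1::real) < of_int k" "of_int k < (1::real)"
  then have "-1 < k" "k < 1" by linarith+
  then show "k = 0" by linarith
qed

lemma dcw_pos: "0 \<le> a \<Longrightarrow> a < 1 \<Longrightarrow> 0 \<le> b \<Longrightarrow> b < 1 \<Longrightarrow> a \<noteq> b \<Longrightarrow> 0 < dcw a b"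
proof -
  assume *: "0 \<le> a" "a < 1" "0 \<le> b" "b < 1" "a \<noteq> b"
  have "dcw a b \<noteq> 0"
  proof
    assume "dcw a b = 0"
    then have "frac (b - a) = 0" by (simp add: dcw_def)
    then obtain k::int where k: "b - a = of_int k" using frac_eq_0_iff Ints_cases by metis
    have "-1 < b - a" "b - a < 1" using * by auto
    then have "k = 0" using k int_between by metis
    then have "b - a = 0" using k by simp
    then show False using * by simp
  qed
  then show ?thesis using dcw_ge0[of a b] by linarith
qed

lemma dcw_add: "dcw a b + dcw b c < 1 \<Longrightarrow> dcw a c = dcw a b + dcw b c"
proof -
  assume h: "dcw a b + dcw b c < 1"
  have "c - a = (b - a) + (c - b)" by simp
  have e: "c - a = dcw a b + dcw b c + of_int (floor (b - a) + floor (c - b))"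
    by (simp add: dcw_def frac_def)
  have "dcw a c = frac (dcw a b + dcw b c)"
    by (simp add: dcw_def e frac_shift_int)
  also have "\<dots> = dcw a b + dcw b c" using h dcw_ge0[of a b] dcw_ge0[of b c] by (simp add: frac_eq_self)
  finally show ?thesis .
qed

lemma lift_iff: "V \<subseteq> {0..<1} \<Longrightarrow> x \<in> lift V \<longleftrightarrow> frac x \<in> V"
proof
  assume V: "V \<subseteq> {0..<1}" and "x \<in> lift V"
  then obtain y k where "x = y + of_int k" "y \<in> V" by (auto simp: lift_def)
  moreover have "frac y = y" using V \<open>y \<in> V\<close> by (auto intro: frac_eq_self)
  ultimately show "frac x \<in> V" by (simp add: frac_shift_int)
next
  assume "frac x \<in> V"
  moreover have "x = frac x + of_int (floor x)" by (simp add: frac_def)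
  ultimately show "x \<in> lift V" unfolding lift_def by blast
qed

section \<open>distance to nearest integer\<close>

definition nint :: "real \<Rightarrow> real" where "nint t = min (frac t) (frac (- t))"

lemma nint_le: "nint t \<le> \<bar>t - of_int k\<bar>"
proof (cases "k \<le> floor t")
  case True
  then have "frac t \<le> t - of_int k" unfolding frac_def by linarith
  then show ?thesis unfolding nint_def by linarith
next
  case False
  then have k: "k \<ge> floor t + 1" by linarith
  have "frac (-t) = of_int (ceiling t) - t"
    by (simp add: frac_def ceiling_def)
  also have "\<dots> \<le> of_int k - t" using k ceiling_diff_floor_le_1[of t] by linarith
  finally show ?thesis unfolding nint_def by linarith
qed

lemma nint_attained: "\<exists>k::int. nint t = \<bar>t - of_int k\<bar>"
proof (cases "frac t \<le> frac (-t)")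
  case True
  then have "nint t = \<bar>t - of_int (floor t)\<bar>" unfolding nint_def frac_def by auto
  then show ?thesis by blast
next
  case False
  then have "nint t = frac (-t)" unfolding nint_def by auto
  also have "\<dots> = \<bar>t - of_int (- floor (-t))\<bar>" unfolding frac_def
    by (smt (verit) of_int_floor_le of_int_minus)
  finally show ?thesis by blast
qed

lemma nint_ge0: "0 \<le> nint t" unfolding nint_def by (simp add: frac_ge_0)

lemma nint_triangle: "nint (s + t) \<le> nint s + nint t"
proof -
  obtain k1 where k1: "nint s = \<bar>s - of_int k1\<bar>" using nint_attained by blast
  obtain k2 where k2: "nint t = \<bar>t - of_int k2\<bar>" using nint_attained by blast
  have "nint (s + t) \<le> \<bar>s + t - of_int (k1 + k2)\<bar>" by (rule nint_le)
  also have "\<dots> \<le> \<bar>s - of_int k1\<bar> + \<bar>t - of_int k2\<bar>" by simp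
  finally show ?thesis using k1 k2 by simp
qed

lemma nint_minus: "nint (- t) = nint t" unfolding nint_def by auto

lemma nint_shift: "nint (t + of_int k) = nint t"
proof -
  have "- (t + of_int k) = - t + of_int (- k)" by simp
  then show ?thesis unfolding nint_def by (simp only: frac_shift_int)
qed

lemma dcirc_nint: "dcirc x y = nint (x - y)"
  unfolding dcirc_def nint_def by simp

lemma dcirc_frac_le: "dcirc (frac a) (frac b) \<le> \<bar>a - b\<bar>"
proof -
  have "frac a - frac b = (a - b) + of_int (floor b - floor a)" by (simp add: frac_def)
  then have "nint (frac a - frac b) = nint (a - b)"
    by (simp only: nint_shift)
  then show ?thesis using nint_le[of "a - b" 0] by (simp add: dcirc_nint)
qed

lemma dcirc_zero: "0 \<le> x \<Longrightarrow> x < 1 \<Longrightarrow> 0 \<le> y \<Longrightarrow> y < 1 \<Longrightarrow> dcirc x y \<le> 0 \<Longrightarrow> x = y"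
proof -
  assume *: "0 \<le> x" "x < 1" "0 \<le> y" "y < 1" "dcirc x y \<le> 0"
  then have "nint (x - y) = 0" using nint_ge0[of "x-y"] dcirc_nint[of x y] by linarith
  then obtain k::int where "\<bar>x - y - of_int k\<bar> = 0" using nint_attained by metis
  then have k: "x - y = of_int k" by simp
  have "-1 < x - y" "x - y < 1" using * by auto
  then have "k = 0" using k by linarith
  then show ?thesis using k by simp
qed


lemma sum_split: "(\<Sum>i<a+b. f i) = (\<Sum>i<a. f i) + (\<Sum>i<b. f (a+i)) " for f :: "nat \<Rightarrow> real"
  by (induction b) (simp_all add: add.assoc)

lemma sum_blocks: "(\<Sum>i<n*k. f i) = (\<Sum>j<n. \<Sum>t<k. f (j*k+t))" for f :: "nat \<Rightarrow> real"
proof (induction n)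
  case 0 then show ?case by simp
next
  case (Suc n)
  have "(\<Sum>i<Suc n*k. f i) = (\<Sum>i<n*k + k. f i)" by (simp add: add.commute)
  also have "\<dots> = (\<Sum>i<n*k. f i) + (\<Sum>t<k. f (n*k+t))" by (rule sum_split)
  finally show ?case using Suc by simp
qed

definition walk :: "(real \<Rightarrow> real \<Rightarrow> bool) \<Rightarrow> nat \<Rightarrow> real \<Rightarrow> (nat \<Rightarrow> real) \<Rightarrow> bool" where
  "walk E m v w \<longleftrightarrow> w 0 = v \<and> (\<forall>i<m. w (Suc i) \<in> Nplus E (w i))"

definition disp :: "(nat \<Rightarrow> real) \<Rightarrow> nat \<Rightarrow> real" where
  "disp w m = (\<Sum>i<m. dcw (w i) (w (Suc i)))"

definition Dset :: "(real \<Rightarrow> real \<Rightarrow> bool) \<Rightarrow> nat \<Rightarrow> real \<Rightarrow> real set" where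
  "Dset E m v = {disp w m | w. walk E m v w}"

definition Gam :: "(real \<Rightarrow> real \<Rightarrow> bool) \<Rightarrow> nat \<Rightarrow> real \<Rightarrow> real" where
  "Gam E m x = x + gamma E m (frac x)"

lemma disp_0[simp]: "disp w 0 = 0" by (simp add: disp_def)
lemma disp_Suc: "disp w (Suc i) = disp w i + dcw (w i) (w (Suc i))" by (simp add: disp_def)

lemma disp_ge0: "0 \<le> disp w m" unfolding disp_def by (rule sum_nonneg) (simp add: dcw_ge0)
lemma disp_le: "disp w m \<le> real m"
proof -
  have "disp w m \<le> (\<Sum>i<m. 1)" unfolding disp_def by (rule sum_mono) (simp add: dcw_lt1 less_imp_le)
  then show ?thesis by simp
qed

lemma disp_mono: "i \<le> j \<Longrightarrow> disp w i \<le> disp w j"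
proof (induction j)
  case 0 then show ?case by simp
next
  case (Suc j)
  then show ?case using dcw_ge0[of "w j" "w (Suc j)"] by (cases "i = Suc j") (auto simp: disp_Suc)
qed

lemma walk_const: "walk E m v (\<lambda>_. v)" by (simp add: walk_def Nplus_def)
lemma disp_const: "disp (\<lambda>_. v) m = 0" by (simp add: disp_def)

lemma Dset_ne: "Dset E m v \<noteq> {}" unfolding Dset_def using walk_const by blast
lemma Dset_bdd: "bdd_above (Dset E m v)" unfolding Dset_def bdd_above_def using disp_le by blast

lemma gamma_eq: "gamma E m v = Sup (Dset E m v)"
proof (cases "m = 0")
  case True
  then have "Dset E m v = {0}" unfolding Dset_def using walk_const by auto
  then show ?thesis using True by (simp add: gamma_def)
qed (simp add: gamma_def Dset_def walk_def disp_def)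

lemma gamma_ge: "walk E m v w \<Longrightarrow> disp w m \<le> gamma E m v"
  unfolding gamma_eq using Dset_bdd[of E m v] by (intro cSup_upper) (auto simp: Dset_def)

lemma gamma_ge0: "0 \<le> gamma E m v"
  using gamma_ge[OF walk_const[of E m v]] disp_const by simp

lemma gamma_le: "(\<And>w. walk E m v w \<Longrightarrow> disp w m \<le> B) \<Longrightarrow> gamma E m v \<le> B"
  unfolding gamma_eq using Dset_ne[of E m v] by (intro cSup_least) (auto simp: Dset_def)

lemma gamma_approx: "e > 0 \<Longrightarrow> \<exists>w. walk E m v w \<and> gamma E m v - e < disp w m"
proof -
  assume "e > 0"
  then have "gamma E m v - e < Sup (Dset E m v)" by (simp add: gamma_eq)
  then obtain d where "d \<in> Dset E m v" "gamma E m v - e < d" using less_cSupD[OF Dset_ne] by blast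
  then show ?thesis unfolding Dset_def by blast
qed

lemma disp_split: "disp w (a+b) = disp w a + disp (\<lambda>i. w (a+i)) b"
  by (simp add: disp_def sum_split)

lemma walk_split:
  assumes "walk E (a+b) v w"
  shows "walk E a v w" "walk E b (w a) (\<lambda>i. w (a+i))"
    "disp w (a+b) = disp w a + disp (\<lambda>i. w (a+i)) b"
  using assms by (auto simp: walk_def disp_def sum_split)

lemma walk_concat:
  assumes "walk E a v w1" "walk E b (w1 a) w2"
  shows "walk E (a+b) v (\<lambda>i. if i \<le> a then w1 i else w2 (i - a))"
    "disp (\<lambda>i. if i \<le> a then w1 i else w2 (i - a)) (a+b) = disp w1 a + disp w2 b"
proof -
  let ?w = "\<lambda>i. if i \<le> a then w1 i else w2 (i - a)"
  show "walk E (a+b) v ?w" unfolding walk_def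
  proof (intro conjI allI impI)
    show "?w 0 = v" using assms by (simp add: walk_def)
  next
    fix i assume i: "i < a + b"
    show "?w (Suc i) \<in> Nplus E (?w i)"
    proof (cases "i < a")
      case True then show ?thesis using assms(1) by (simp add: walk_def)
    next
      case False
      then have "i - a < b" using i by simp
      then have "w2 (Suc (i - a)) \<in> Nplus E (w2 (i - a))" using assms(2) by (simp add: walk_def)
      moreover have "Suc i - a = Suc (i - a)" using False by simp
      moreover have "w2 (i - a) = ?w i"
      proof (cases "i = a")
        case True then show ?thesis using assms(2) by (simp add: walk_def)
      next
        case False2: False then show ?thesis using False by simp
      qed
      ultimately show ?thesis using False by simp
    qed
  qed
  have "disp ?w (a+b) = disp ?w a + disp (\<lambda>i. ?w (a+i)) b"
    by (rule disp_split)
  also have "disp ?w a = disp w1 a" unfolding disp_def by (rule sum.cong) simp_all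
  also have "disp (\<lambda>i. ?w (a+i)) b = disp w2 b"
  proof -
    have eq: "?w (a+i) = w2 i" for i
    proof (cases "i = 0")
      case True then show ?thesis using assms(2) by (simp add: walk_def)
    next
      case False then show ?thesis by simp
    qed
    show ?thesis by (simp only: eq)
  qed
  finally show "disp ?w (a+b) = disp w1 a + disp w2 b" .
qed

locale cg =
  fixes V :: "real set" and E :: "real \<Rightarrow> real \<Rightarrow> bool"
  assumes cyc: "cyclic_graph V E"
begin

lemma Vsub: "V \<subseteq> {0..<1}" using cyc unfolding cyclic_graph_def digraph_on_def by blast
lemma inV: "v \<in> V \<Longrightarrow> 0 \<le> v \<and> v < 1" using Vsub by auto
lemma edgeV: "E a b \<Longrightarrow> a \<in> V \<and> b \<in> V" using cyc unfolding cyclic_graph_def digraph_on_def by blast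
lemma noloop: "\<not> E a a" using cyc unfolding cyclic_graph_def digraph_on_def by blast
lemma noopp: "E a b \<Longrightarrow> \<not> E b a" using cyc unfolding cyclic_graph_def digraph_on_def by blast
lemma cyc_rule: "E v u \<Longrightarrow> w \<in> V \<Longrightarrow> cbetween v w u \<Longrightarrow> E v w \<and> E w u"
  using cyc unfolding cyclic_graph_def by blast

lemma Nplus_V: "a \<in> V \<Longrightarrow> u \<in> Nplus E a \<Longrightarrow> u \<in> V"
  using edgeV by (auto simp: Nplus_def)

lemma lift_iff': "x \<in> lift V \<longleftrightarrow> frac x \<in> V" using lift_iff[OF Vsub] .

lemma walk_V: "walk E m v w \<Longrightarrow> v \<in> V \<Longrightarrow> i \<le> m \<Longrightarrow> w i \<in> V"
proof (induction i)
  case 0 then show ?case by (simp add: walk_def)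
next
  case (Suc i) then show ?case using Nplus_V by (auto simp: walk_def)
qed

lemma walk_pos: "walk E m (frac X) w \<Longrightarrow> frac X \<in> V \<Longrightarrow> i \<le> m \<Longrightarrow> frac (X + disp w i) = w i"
proof (induction i)
  case 0 then show ?case by (simp add: walk_def)
next
  case (Suc i)
  then have fi: "frac (X + disp w i) = w i" by simp
  have "w (Suc i) \<in> V" using walk_V Suc.prems by blast
  then have "frac ((X + disp w i) + dcw (frac (X + disp w i)) (w (Suc i))) = w (Suc i)"
    using inV by (intro frac_pos_step) auto
  then show ?case using fi by (simp add: disp_Suc add.assoc)
qed

lemma step_shift:
  assumes X: "frac X \<in> V" and u: "u \<in> Nplus E (frac X)" and Y: "frac Y \<in> V" and XY: "X \<le> Y"
  shows "frac (max Y (X + dcw (frac X) u)) \<in> Nplus E (frac Y) \<and>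
         Y + dcw (frac Y) (frac (max Y (X + dcw (frac X) u))) = max Y (X + dcw (frac X) u)"
proof -
  define U where "U = X + dcw (frac X) u"
  have uV: "u \<in> V" using Nplus_V X u by blast
  have fU: "frac U = u" unfolding U_def using uV inV by (intro frac_pos_step) auto
  have dlt: "U - X < 1" unfolding U_def using dcw_lt1 by simp
  show ?thesis
  proof (cases "U \<le> Y")
    case True
    then show ?thesis unfolding U_def[symmetric] by (simp add: Nplus_def max_def)
  next
    case False
    then have YU: "Y < U" by simp
    have d: "dcw (frac Y) (frac U) = U - Y" using YU dlt XY by (intro dcw_lift_eq) auto
    have mem: "u \<in> Nplus E (frac Y)"
    proof (cases "X = Y")
      case True then show ?thesis using u by simp
    next
      case False
      then have XY': "X < Y" using XY by simp
      have "u \<noteq> frac X"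
      proof
        assume "u = frac X"
        then have "U = X" unfolding U_def by simp
        then show False using XY' YU by simp
      qed
      then have Eu: "E (frac X) u" using u by (simp add: Nplus_def)
      have d1: "dcw (frac X) (frac Y) = Y - X" using XY' YU dlt by (intro dcw_lift_eq) auto
      have d2: "dcw (frac X) u = U - X" unfolding U_def by simp
      have "cbetween (frac X) (frac Y) u" unfolding cbetween_def d1 d2 using XY' YU by simp
      then have "E (frac Y) u" using cyc_rule Eu Y by blast
      then show ?thesis by (simp add: Nplus_def)
    qed
    show ?thesis using YU mem d fU unfolding U_def[symmetric] by (simp add: max_def)
  qed
qed

lemma maxwalk:
  assumes w: "walk E m (frac X) w" and X: "frac X \<in> V" and Y: "frac Y \<in> V" and XY: "X \<le> Y"
  shows "\<exists>w'. walk E m (frac Y) w' \<and> Y + disp w' m = max Y (X + disp w m) \<and>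
              (\<forall>i\<le>m. w' i = frac Y \<or> w' i = w i)"
proof -
  define P where "P i = max Y (X + disp w i)" for i
  define w' where "w' i = frac (P i)" for i
  have fpos: "i \<le> m \<Longrightarrow> frac (X + disp w i) = w i" for i using walk_pos w X by blast
  have PV: "i \<le> m \<Longrightarrow> frac (P i) \<in> V" for i
    using fpos walk_V[OF w X] Y unfolding P_def max_def by auto
  have step: "w' (Suc i) \<in> Nplus E (w' i) \<and> P i + dcw (w' i) (w' (Suc i)) = P (Suc i)" if i: "i < m" for i
  proof -
    have A: "frac (X + disp w i) \<in> V" using fpos walk_V[OF w X] i by simp
    have B: "w (Suc i) \<in> Nplus E (frac (X + disp w i))" using w i fpos[of i] by (simp add: walk_def)
    have C: "X + disp w i \<le> P i" unfolding P_def by simp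
    note S = step_shift[OF A B PV[OF less_imp_le[OF i]] C]
    have e1: "X + disp w i + dcw (frac (X + disp w i)) (w (Suc i)) = X + disp w (Suc i)"
      using fpos[OF less_imp_le[OF i]] by (simp add: disp_Suc)
    have e2: "max (P i) (X + disp w (Suc i)) = P (Suc i)"
      unfolding P_def using disp_mono[of i "Suc i" w] by (simp add: max_def)
    show ?thesis unfolding w'_def by (rule S[unfolded e1 e2])
  qed
  have "walk E m (frac Y) w'" unfolding walk_def
  proof (intro conjI allI impI)
    show "w' 0 = frac Y" using XY by (simp add: w'_def P_def max_def)
  next
    fix i assume "i < m" then show "w' (Suc i) \<in> Nplus E (w' i)" using step by blast
  qed
  moreover have "disp w' m = P m - P 0"
  proof -
    have "disp w' m = (\<Sum>i<m. P (Suc i) - P i)" unfolding disp_def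
      by (rule sum.cong) (use step in \<open>auto simp: algebra_simps\<close>)
    then show ?thesis by (simp add: sum_lessThan_telescope)
  qed
  moreover have "P 0 = Y" unfolding P_def using XY by simp
  moreover have "\<forall>i\<le>m. w' i = frac Y \<or> w' i = w i"
    unfolding w'_def P_def using fpos by (auto simp: max_def)
  ultimately show ?thesis unfolding P_def by (intro exI[of _ w']) auto
qed

lemma Gam_ge: "x \<le> Gam E m x" by (simp add: Gam_def gamma_ge0)

lemma Gam_shift: "Gam E m (x + of_int k) = Gam E m x + of_int k"
  by (simp add: Gam_def)

lemma Gam_mono:
  assumes X: "frac X \<in> V" and Y: "frac Y \<in> V" and XY: "X \<le> Y"
  shows "Gam E m X \<le> Gam E m Y"
proof -
  have "gamma E m (frac X) \<le> Gam E m Y - X"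
  proof (rule gamma_le)
    fix w assume w: "walk E m (frac X) w"
    obtain w' where w': "walk E m (frac Y) w'" "Y + disp w' m = max Y (X + disp w m)"
      using maxwalk[OF w X Y XY] by blast
    have "disp w' m \<le> gamma E m (frac Y)" using gamma_ge[OF w'(1)] .
    then show "disp w m \<le> Gam E m Y - X" using w'(2) unfolding Gam_def by (simp add: max_def split: if_splits)
  qed
  then show ?thesis unfolding Gam_def by simp
qed

end


lemma Gam_0[simp]: "Gam E 0 x = x" by (simp add: Gam_def gamma_def)

locale cgc = cg +
  assumes clo: "closed (lift V)"
    and cont: "\<And>m. continuous_on (lift V) (\<lambda>x. gamma E m (frac x))"
begin

lemma Gam_in: assumes X: "frac X \<in> V" shows "frac (Gam E m X) \<in> V"
proof -
  have "Gam E m X \<in> lift V" unfolding closed_approachable[OF clo, symmetric]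
  proof (intro allI impI)
    fix e :: real assume e: "e > 0"
    obtain w where w: "walk E m (frac X) w" "gamma E m (frac X) - e < disp w m"
      using gamma_approx[OF e] by blast
    have "frac (X + disp w m) = w m" using walk_pos[OF w(1) X] by simp
    then have inl: "X + disp w m \<in> lift V" using lift_iff' walk_V[OF w(1) X] by simp
    have "disp w m \<le> gamma E m (frac X)" using gamma_ge[OF w(1)] .
    then have "dist (X + disp w m) (Gam E m X) < e" using w(2) unfolding Gam_def dist_real_def by simp
    then show "\<exists>y\<in>lift V. dist y (Gam E m X) < e" using inl by blast
  qed
  then show ?thesis using lift_iff' by simp
qed

lemma Gam_cont: "continuous_on (lift V) (Gam E m)"
  unfolding Gam_def[abs_def] by (intro continuous_on_add continuous_on_id cont)

lemma Gam_add:
  assumes X: "frac X \<in> V"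
  shows "Gam E (a+b) X = Gam E b (Gam E a X)"
proof (rule antisym)
  have "gamma E (a+b) (frac X) \<le> Gam E b (Gam E a X) - X"
  proof (rule gamma_le)
    fix w assume w: "walk E (a+b) (frac X) w"
    note ws = walk_split[OF w]
    define Q where "Q = X + disp w a"
    have fQ: "frac Q = w a" unfolding Q_def using walk_pos[OF ws(1) X] by simp
    have QV: "frac Q \<in> V" using fQ walk_V[OF ws(1) X] by simp
    have "disp (\<lambda>i. w (a+i)) b \<le> gamma E b (frac Q)" using gamma_ge[OF ws(2)] fQ by simp
    then have 1: "X + disp w (a+b) \<le> Gam E b Q" unfolding Gam_def Q_def ws(3) by simp
    have "Q \<le> Gam E a X" unfolding Q_def Gam_def using gamma_ge[OF ws(1)] by simp
    then have "Gam E b Q \<le> Gam E b (Gam E a X)" using Gam_mono QV Gam_in[OF X] by blast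
    then show "disp w (a+b) \<le> Gam E b (Gam E a X) - X" using 1 by simp
  qed
  then show "Gam E (a+b) X \<le> Gam E b (Gam E a X)" unfolding Gam_def[of E "a+b"] by simp
next
  define T where "T = Gam E a X"
  have TV: "T \<in> lift V" using Gam_in[OF X] lift_iff' unfolding T_def by simp
  show "Gam E b (Gam E a X) \<le> Gam E (a+b) X"
  proof (rule field_le_epsilon)
    fix e :: real assume e: "e > 0"
    obtain d where d: "d > 0" "\<And>x'. x' \<in> lift V \<Longrightarrow> dist x' T < d \<Longrightarrow> dist (Gam E b x') (Gam E b T) < e"
      using Gam_cont[of b] TV e unfolding continuous_on_iff by metis
    obtain w1 where w1: "walk E a (frac X) w1" "gamma E a (frac X) - d < disp w1 a"
      using gamma_approx[OF d(1)] by blast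
    define Q where "Q = X + disp w1 a"
    have fQ: "frac Q = w1 a" unfolding Q_def using walk_pos[OF w1(1) X] by simp
    have QV: "Q \<in> lift V" using fQ walk_V[OF w1(1) X] lift_iff' by simp
    have "disp w1 a \<le> gamma E a (frac X)" using gamma_ge[OF w1(1)] .
    then have "dist Q T < d" unfolding Q_def T_def Gam_def dist_real_def using w1(2) by simp
    then have 1: "Gam E b T < Gam E b Q + e" using d(2)[OF QV] unfolding dist_real_def by simp
    have "gamma E b (w1 a) \<le> gamma E (a+b) (frac X) - disp w1 a"
    proof (rule gamma_le)
      fix w2 assume w2: "walk E b (w1 a) w2"
      note c = walk_concat[OF w1(1) w2]
      show "disp w2 b \<le> gamma E (a+b) (frac X) - disp w1 a"
        using gamma_ge[OF c(1)] c(2) by simp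
    qed
    then have "Gam E b Q \<le> Gam E (a+b) X" unfolding Gam_def Q_def using fQ Q_def by simp
    then show "Gam E b (Gam E a X) \<le> Gam E (a+b) X + e" using 1 unfolding T_def by simp
  qed
qed

lemma Gam_iter_in: "frac X \<in> V \<Longrightarrow> frac ((Gam E a ^^ m) X) \<in> V"
  by (induction m) (simp_all add: Gam_in)

lemma Gam_iter: "frac X \<in> V \<Longrightarrow> Gam E (m*a) X = (Gam E a ^^ m) X"
proof (induction m)
  case 0 then show ?case by simp
next
  case (Suc m)
  have "Gam E (Suc m * a) X = Gam E (m*a + a) X" by (simp add: add.commute)
  also have "\<dots> = Gam E a (Gam E (m*a) X)" using Gam_add Suc.prems by blast
  finally show ?case using Suc by simp
qed

lemma Gam_iter_shift: "(Gam E a ^^ m) (x + of_int k) = (Gam E a ^^ m) x + of_int k"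
  by (induction m) (simp_all add: Gam_shift)

lemma Gam_comm: "frac X \<in> V \<Longrightarrow> Gam E i (Gam E j X) = Gam E j (Gam E i X)"
  using Gam_add[of X j i] Gam_add[of X i j] by (simp add: add.commute)

end


lemma frac_diff_nat[simp]: "frac (x - real n) = frac x"
  using frac_shift_int_diff[of x "int n"] by simp
lemma frac_add_nat[simp]: "frac (x + real n) = frac x"
  using frac_shift_int[of x "int n"] by simp

lemma iter_shift_const:
  assumes sh: "\<And>x k. f (x + of_int k) = f x + (of_int k :: real)" and fL: "f L = L + of_int c"
  shows "(f ^^ j) L = L + of_int (int j * c)"
proof (induction j)
  case 0 then show ?case by simp
next
  case (Suc j)
  have "(f ^^ Suc j) L = f (L + of_int (int j * c))" using Suc by simp
  also have "\<dots> = f L + of_int (int j * c)" by (rule sh)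
  also have "\<dots> = L + of_int c + of_int (int j * c)" using fL by simp
  finally show ?case by (simp add: algebra_simps)
qed

lemma dcirc_tri: "dcirc y z \<le> dcirc s y + dcirc s z"
proof -
  have "y - z = (s - z) + (- (s - y))" by simp
  then have "nint (y - z) \<le> nint (s - z) + nint (- (s - y))" using nint_triangle by metis
  moreover have "nint (- (s - y)) = nint (s - y)" by (rule nint_minus)
  ultimately show ?thesis unfolding dcirc_nint by linarith
qed

lemma dcirc_ge0: "0 \<le> dcirc x y" by (simp add: dcirc_nint nint_ge0)

lemma circ_lim_char:
  assumes "(\<lambda>m. s m) \<longlonglongrightarrow> L"
  shows "circ_lim (\<lambda>m. frac (s m)) = frac L"
  unfolding circ_lim_def
proof (rule the_equality)
  have "(\<lambda>m. s m - L) \<longlonglongrightarrow> 0" using tendsto_diff[OF assms tendsto_const[of L]] by simp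
  then have g: "(\<lambda>m. \<bar>s m - L\<bar>) \<longlonglongrightarrow> 0" by (rule tendsto_rabs_zero)
  have "(\<lambda>m. dcirc (frac (s m)) (frac L)) \<longlonglongrightarrow> 0"
    by (rule Lim_null_comparison[OF _ g]) (simp add: dcirc_ge0 dcirc_frac_le)
  then show "0 \<le> frac L \<and> frac L < 1 \<and> (\<lambda>m. dcirc (frac (s m)) (frac L)) \<longlonglongrightarrow> 0"
    by (simp add: frac_ge_0 frac_lt_1)
  fix y assume y: "0 \<le> y \<and> y < 1 \<and> (\<lambda>m. dcirc (frac (s m)) y) \<longlonglongrightarrow> 0"
  have "(\<lambda>m. dcirc (frac (s m)) y + dcirc (frac (s m)) (frac L)) \<longlonglongrightarrow> 0 + 0"
    using y \<open>(\<lambda>m. dcirc (frac (s m)) (frac L)) \<longlonglongrightarrow> 0\<close> by (intro tendsto_add) auto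
  then have "dcirc y (frac L) \<le> 0 + 0"
    by (rule LIMSEQ_le_const) (auto intro: dcirc_tri)
  then show "y = frac L" using y dcirc_zero[of y "frac L"] by (simp add: frac_ge_0 frac_lt_1)
qed

context cgc begin

lemma Gam_frac: "frac (Gam E m (frac x)) = frac (Gam E m x)"
proof -
  have "frac x = x + of_int (- floor x)" by (simp add: frac_def)
  then have "Gam E m (frac x) = Gam E m x + of_int (- floor x)" using Gam_shift by metis
  then show ?thesis by simp
qed

lemma fmap_Gam: "fmap E m v = frac (Gam E m v)" if "v \<in> V"
proof -
  have "frac v = v" using inV[OF that] by (simp add: frac_eq_self)
  then show ?thesis unfolding fmap_def Gam_def by simp
qed

lemma fmap_frac: "fmap E m (frac x) = frac (Gam E m x)"
  unfolding fmap_def using Gam_frac[of m x] by (simp add: Gam_def)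

end

locale cgcq = cgc +
  fixes p q :: nat
begin

definition H :: "real \<Rightarrow> real" where "H x = Gam E q x - real p"

lemma H_in: "frac x \<in> V \<Longrightarrow> frac (H x) \<in> V" by (simp add: H_def Gam_in)
lemma H_iter_in: "frac x \<in> V \<Longrightarrow> frac ((H ^^ m) x) \<in> V" by (induction m) (simp_all add: H_in)
lemma H_mono: "frac x \<in> V \<Longrightarrow> frac y \<in> V \<Longrightarrow> x \<le> y \<Longrightarrow> H x \<le> H y"
  unfolding H_def using Gam_mono by simp
lemma H_shift: "H (x + of_int k) = H x + of_int k" unfolding H_def by (simp add: Gam_shift)
lemma H_cont: "continuous_on (lift V) H"
  unfolding H_def[abs_def] by (intro continuous_on_diff Gam_cont continuous_on_const)

lemma H_iter: "frac x \<in> V \<Longrightarrow> (H ^^ m) x = Gam E (m*q) x - real m * real p"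
proof (induction m)
  case 0 then show ?case by simp
next
  case (Suc m)
  have "(H ^^ Suc m) x = H ((H ^^ m) x)" by simp
  also have "\<dots> = H (Gam E (m*q) x - real m * real p)" using Suc by simp
  also have "\<dots> = Gam E q (Gam E (m*q) x - real m * real p) - real p" by (simp add: H_def)
  also have "Gam E q (Gam E (m*q) x - real m * real p) = Gam E q (Gam E (m*q) x) - real m * real p"
    using Gam_shift[of q "Gam E (m*q) x" "- int (m*p)"] by simp
  also have "Gam E q (Gam E (m*q) x) = Gam E (m*q + q) x" using Gam_add Suc.prems by simp
  finally show ?case by (simp add: algebra_simps)
qed

lemma lim_fix:
  assumes x: "frac x \<in> V" and lim: "(\<lambda>m. (H ^^ m) x) \<longlonglongrightarrow> L"
  shows "frac L \<in> V \<and> H L = L"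
proof -
  have inl: "\<And>m. (H ^^ m) x \<in> lift V" using H_iter_in[OF x] lift_iff' by simp
  have LV: "L \<in> lift V" using closed_sequentially[OF clo inl lim] .
  have "(\<lambda>m. H ((H ^^ m) x)) \<longlonglongrightarrow> H L"
    by (rule continuous_on_tendsto_compose[OF H_cont lim LV]) (simp add: inl)
  moreover have "(\<lambda>m. H ((H ^^ m) x)) \<longlonglongrightarrow> L" using LIMSEQ_Suc[OF lim] by simp
  ultimately have "H L = L" using LIMSEQ_unique by blast
  then show ?thesis using LV lift_iff' by simp
qed

lemma conv:
  assumes a: "frac a \<in> V" "a \<le> H a" and b: "frac b \<in> V" "H b \<le> b" and x: "frac x \<in> V"
  shows "\<exists>L. (\<lambda>m. (H ^^ m) x) \<longlonglongrightarrow> L"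
proof (cases "x \<le> H x")
  case True
  define B where "B = b + of_int (ceiling (x - b))"
  have BV: "frac B \<in> V" using b unfolding B_def by simp
  have HB: "H B \<le> B" unfolding B_def H_shift using b by simp
  have xB: "x \<le> B" unfolding B_def by linarith
  have inc: "(H ^^ m) x \<le> (H ^^ Suc m) x" for m
  proof (induction m)
    case 0 then show ?case using True by simp
  next
    case (Suc m)
    have "H ((H ^^ m) x) \<le> H ((H ^^ Suc m) x)"
      by (rule H_mono[OF H_iter_in[OF x] H_iter_in[OF x] Suc.IH])
    then show ?case by simp
  qed
  have bd: "(H ^^ m) x \<le> B" for m
  proof (induction m)
    case 0 then show ?case using xB by simp
  next
    case (Suc m)
    then have "H ((H ^^ m) x) \<le> H B" using H_mono H_iter_in[OF x] BV by blast
    then show ?case using HB by simp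
  qed
  have "incseq (\<lambda>m. (H ^^ m) x)" using inc by (simp add: incseq_Suc_iff)
  moreover have "bdd_above (range (\<lambda>m. (H ^^ m) x))" using bd by (auto simp: bdd_above_def)
  ultimately show ?thesis using LIMSEQ_incseq_SUP by blast
next
  case False
  define A where "A = a + of_int (floor (x - a))"
  have AV: "frac A \<in> V" using a unfolding A_def by simp
  have HA: "A \<le> H A" unfolding A_def H_shift using a by simp
  have xA: "A \<le> x" unfolding A_def by linarith
  have dec: "(H ^^ Suc m) x \<le> (H ^^ m) x" for m
  proof (induction m)
    case 0 then show ?case using False by simp
  next
    case (Suc m)
    have "H ((H ^^ Suc m) x) \<le> H ((H ^^ m) x)"
      by (rule H_mono[OF H_iter_in[OF x] H_iter_in[OF x] Suc.IH])
    then show ?case by simp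
  qed
  have bd: "A \<le> (H ^^ m) x" for m
  proof (induction m)
    case 0 then show ?case using xA by simp
  next
    case (Suc m)
    then have "H A \<le> H ((H ^^ m) x)" using H_mono H_iter_in[OF x] AV by blast
    then show ?case using HA by simp
  qed
  have "decseq (\<lambda>m. (H ^^ m) x)" using dec by (simp add: decseq_Suc_iff)
  moreover have "bdd_below (range (\<lambda>m. (H ^^ m) x))" using bd by (auto simp: bdd_below_def)
  ultimately show ?thesis using LIMSEQ_decseq_INF by blast
qed

lemma vstar_char:
  assumes x: "frac x \<in> V" and lim: "(\<lambda>m. (H ^^ m) x) \<longlonglongrightarrow> L"
  shows "vstar E q (frac x) = frac L"
proof -
  have "fmap E (m*q) (frac x) = frac ((H ^^ m) x)" for m
    using fmap_frac[of "m*q" x] H_iter[OF x, of m] by (simp add: of_nat_mult[symmetric] del: of_nat_mult)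
  then have "vstar E q (frac x) = circ_lim (\<lambda>m. frac ((H ^^ m) x))" by (simp add: vstar_def)
  also have "\<dots> = frac L" using circ_lim_char[OF lim] .
  finally show ?thesis .
qed

end


context cgcq begin

lemma main_given:
  assumes ea: "\<exists>a. frac a \<in> V \<and> a \<le> H a" and eb: "\<exists>b. frac b \<in> V \<and> H b \<le> b"
    and cop: "coprime p q" and v: "v \<in> V"
  shows "vstar E q (fmap E i v) = fmap E i (vstar E q v) \<and>
         (fmap E i (vstar E q v) = vstar E q v \<longleftrightarrow> q dvd i)"
proof -
  have fv: "frac v = v" using inV[OF v] by (simp add: frac_eq_self)
  have vV: "frac v \<in> V" using fv v by simp
  obtain a where a: "frac a \<in> V" "a \<le> H a" using ea by blast
  obtain b where b: "frac b \<in> V" "H b \<le> b" using eb by blast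
  obtain L where lim: "(\<lambda>m. (H ^^ m) v) \<longlonglongrightarrow> L" using conv[OF a b vV] by blast
  have LV: "frac L \<in> V" and HL: "H L = L" using lim_fix[OF vV lim] by auto
  have vs: "vstar E q v = frac L" using vstar_char[OF vV lim] fv by simp
  define x' where "x' = Gam E i v"
  have x'V: "frac x' \<in> V" unfolding x'_def using Gam_in[OF vV] .
  have fx': "fmap E i v = frac x'" unfolding x'_def using fmap_Gam[OF v] .
  have it: "(H ^^ m) x' = Gam E i ((H ^^ m) v)" for m
  proof -
    have "(H ^^ m) x' = Gam E (m*q) (Gam E i v) - real m * real p"
      using H_iter[OF x'V] unfolding x'_def by simp
    also have "Gam E (m*q) (Gam E i v) = Gam E i (Gam E (m*q) v)" using Gam_comm[OF vV] by simp
    also have "Gam E i (Gam E (m*q) v) - real m * real p = Gam E i (Gam E (m*q) v - real m * real p)"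
      using Gam_shift[of i "Gam E (m*q) v" "- int (m*p)"] by simp
    also have "Gam E (m*q) v - real m * real p = (H ^^ m) v" using H_iter[OF vV] by simp
    finally show ?thesis .
  qed
  have inl: "\<And>m. (H ^^ m) v \<in> lift V" using H_iter_in[OF vV] lift_iff' by simp
  have LV': "L \<in> lift V" using LV lift_iff' by simp
  have "(\<lambda>m. Gam E i ((H ^^ m) v)) \<longlonglongrightarrow> Gam E i L"
    by (rule continuous_on_tendsto_compose[OF Gam_cont lim LV']) (simp add: inl)
  then have lim2: "(\<lambda>m. (H ^^ m) x') \<longlonglongrightarrow> Gam E i L" using it by simp
  have part1: "vstar E q (fmap E i v) = frac (Gam E i L)"
    using vstar_char[OF x'V lim2] fx' by simp
  have part2: "fmap E i (vstar E q v) = frac (Gam E i L)"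
    using fmap_frac[of i L] vs by simp
  have GqL: "Gam E q L = L + of_int (int p)" using HL unfolding H_def by simp
  have shq: "\<And>x k. Gam E q (x + of_int k) = Gam E q x + of_int k" by (rule Gam_shift)
  have iterq: "(Gam E q ^^ j) L = L + of_int (int j * int p)" for j
    by (rule iter_shift_const[OF shq GqL])
  have "frac (Gam E i L) = frac L \<longleftrightarrow> q dvd i"
  proof
    assume "q dvd i"
    then obtain j where j: "i = j * q" by (auto simp: dvd_def mult.commute)
    have "Gam E i L = L + of_int (int j * int p)" unfolding j Gam_iter[OF LV] iterq ..
    then show "frac (Gam E i L) = frac L" by (simp only: frac_shift_int)
  next
    assume "frac (Gam E i L) = frac L"
    then obtain r where r: "Gam E i L = L + of_int r" using frac_eq_iff_diff_int by blast
    have shi: "\<And>x k. Gam E i (x + of_int k) = Gam E i x + of_int k" by (rule Gam_shift)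
    have "Gam E (q*i) L = L + of_int (int q * r)"
      unfolding Gam_iter[OF LV] by (rule iter_shift_const[OF shi r])
    moreover have "Gam E (i*q) L = L + of_int (int i * int p)"
      unfolding Gam_iter[OF LV] by (rule iterq)
    ultimately have "(of_int (int q * r) :: real) = of_int (int i * int p)" by (simp add: mult.commute)
    then have "int q * r = int i * int p" by (simp only: of_int_eq_iff)
    then have "int q dvd int (i * p)" by (metis dvd_triv_left of_nat_mult)
    then have "q dvd i * p" by (simp only: of_nat_dvd_iff)
    then show "q dvd i" using cop by (simp add: coprime_dvd_mult_left_iff coprime_commute)
  qed
  then show ?thesis using part1 part2 vs by simp
qed

end


section \<open>winding fraction bounds\<close>

lemma cyc_hom_frac: "cyc_hom n k E h \<Longrightarrow> real k / real n < 1/2"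
proof -
  assume "cyc_hom n k E h"
  then have "2 * k < n" "1 \<le> k" by (auto simp: cyc_hom_def)
  then have "2 * real k < real n" "0 < real n" by linarith+
  then show ?thesis by (simp add: field_simps)
qed

lemma wf_fin_le: "wf_fin E \<le> 1/2"
proof -
  define S where "S = {real k / real n | k n. \<exists>h. cyc_hom n k E h}"
  have "\<forall>x\<in>S. x \<le> 1/2" unfolding S_def using cyc_hom_frac by fastforce
  then have "S \<noteq> {} \<Longrightarrow> Sup S \<le> 1/2" by (intro cSup_least) auto
  then show ?thesis unfolding wf_fin_def S_def[symmetric] Let_def by auto
qed

lemma wf_fin_ge: "cyc_hom n k E h \<Longrightarrow> real k / real n \<le> wf_fin E"
proof -
  assume h: "cyc_hom n k E h"
  define S where "S = {real k / real n | k n. \<exists>h. cyc_hom n k E h}"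
  have mem: "real k / real n \<in> S" unfolding S_def using h by blast
  have "\<forall>x\<in>S. x \<le> 1/2" unfolding S_def using cyc_hom_frac by fastforce
  then have "bdd_above S" by (intro bdd_aboveI[where M="1/2"]) auto
  then have "real k / real n \<le> Sup S" using mem by (intro cSup_upper)
  then show ?thesis using mem unfolding wf_fin_def S_def[symmetric] Let_def by auto
qed

lemma wf_fin_gt: "r < wf_fin E \<Longrightarrow> 0 \<le> r \<Longrightarrow> \<exists>n k h. cyc_hom n k E h \<and> r < real k / real n"
proof -
  assume r: "r < wf_fin E" "0 \<le> r"
  define S where "S = {real k / real n | k n. \<exists>h. cyc_hom n k E h}"
  have ne: "S \<noteq> {}" using r unfolding wf_fin_def S_def[symmetric] Let_def by (auto split: if_splits)
  then have "r < Sup S" using r unfolding wf_fin_def S_def[symmetric] Let_def by auto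
  then obtain x where "x \<in> S" "r < x" using less_cSupD[OF ne] by blast
  then show ?thesis unfolding S_def by blast
qed

lemma wf_ge: "W \<subseteq> V \<Longrightarrow> finite W \<Longrightarrow> wf_fin (induced E W) \<le> wf V E"
  unfolding wf_def using wf_fin_le by (intro cSup_upper bdd_aboveI[where M="1/2"]) auto

lemma wf_gt: "r < wf V E \<Longrightarrow> \<exists>W. W \<subseteq> V \<and> finite W \<and> r < wf_fin (induced E W)"
proof -
  assume r: "r < wf V E"
  have ne: "{wf_fin (induced E W) | W. W \<subseteq> V \<and> finite W} \<noteq> {}" by blast
  from less_cSupD[OF ne] r show ?thesis unfolding wf_def by blast
qed

section \<open>homomorphism gives long walks\<close>

lemma sum_periodic:
  fixes f :: "nat \<Rightarrow> real" and n b :: nat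
  assumes per: "\<And>j. f (j + n) = f j"
  shows "(\<Sum>t<n. f (b*n + t)) = (\<Sum>t<n. f t)"
proof -
  have "f (b*n + t) = f t" for t
  proof (induction b)
    case 0 then show ?case by simp
  next
    case (Suc b)
    have "f (Suc b * n + t) = f (b*n + t + n)" by (simp add: algebra_simps)
    then show ?case using per Suc by simp
  qed
  then show ?thesis by simp
qed

lemma sum_shift_periodic:
  fixes d :: "nat \<Rightarrow> real" and n a :: nat
  assumes per: "\<And>j. d (j + n) = d j"
  shows "(\<Sum>t<n. d (a + t)) = (\<Sum>t<n. d t)"
proof (induction a)
  case 0 then show ?case by simp
next
  case (Suc a)
  have "(\<Sum>t<Suc n. d (a + t)) = d (a + 0) + (\<Sum>t<n. d (a + Suc t))" by (rule sum.lessThan_Suc_shift)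
  moreover have "(\<Sum>t<Suc n. d (a + t)) = (\<Sum>t<n. d (a + t)) + d (a + n)" by simp
  moreover have "d (a + n) = d a" using per by simp
  ultimately have "(\<Sum>t<n. d (a + Suc t)) = (\<Sum>t<n. d (a + t))" by simp
  then show ?case using Suc by simp
qed

context cg begin

lemma hom_bound:
  assumes hom: "cyc_hom n k E' h" and sub: "\<And>a b. E' a b \<Longrightarrow> E a b"
    and bound: "\<And>y. y \<in> V \<Longrightarrow> gamma E q y \<le> M"
  shows "real q * real k \<le> real n * M"
proof -
  have kn: "1 \<le> k" "2 * k < n" using hom by (auto simp: cyc_hom_def)
  have n0: "0 < n" using kn by simp
  have edge: "i < n \<Longrightarrow> 1 \<le> s \<Longrightarrow> s \<le> k \<Longrightarrow> E (h i) (h ((i + s) mod n))" for i s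
    using hom sub by (auto simp: cyc_hom_def)
  have edge': "E (h (a mod n)) (h ((a + s) mod n))" if "1 \<le> s" "s \<le> k" for a s
  proof -
    have "E (h (a mod n)) (h ((a mod n + s) mod n))" using edge n0 that by simp
    moreover have "(a mod n + s) mod n = (a + s) mod n" by (simp add: mod_add_left_eq)
    ultimately show ?thesis by simp
  qed
  define d where "d i = dcw (h (i mod n)) (h (Suc i mod n))" for i
  have dpos: "0 < d i" for i
  proof -
    have e: "E (h (i mod n)) (h ((i + 1) mod n))" using edge'[of 1 i] kn by simp
    then have "h (i mod n) \<in> V" "h ((i+1) mod n) \<in> V" using edgeV by auto
    moreover have "h (i mod n) \<noteq> h ((i+1) mod n)" using e noloop by metis
    ultimately show ?thesis unfolding d_def using inV by (intro dcw_pos) auto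
  qed
  have dper: "d (j + n) = d j" for j
  proof -
    have "Suc (j + n) mod n = Suc j mod n" by (metis add_Suc mod_add_self2)
    then show ?thesis unfolding d_def by simp
  qed
  have dsum: "(\<Sum>i<n. d i) = 1"
  proof -
    have "(\<Sum>i<n. d i) = (\<Sum>i<n. dcw (h i) (h ((i + 1) mod n)))"
      unfolding d_def by (rule sum.cong) auto
    then show ?thesis using hom by (simp add: cyc_hom_def)
  qed
  have dsum_a: "(\<Sum>t<n. d (a + t)) = 1" for a using sum_shift_periodic[of d n a] dper dsum by simp
  have partial: "(\<Sum>t<s. d (a + t)) < 1" if "s \<le> k" for a s
  proof -
    have sn: "s + (n - s) = n" using that kn by simp
    have ns: "0 < n - s" using that kn by simp
    have "(\<Sum>t<n. d (a + t)) = (\<Sum>t<s. d (a + t)) + (\<Sum>t<n-s. d (a + (s + t)))"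
      using sum_split[of "\<lambda>t. d (a + t)" s "n - s"] sn by simp
    moreover have "0 < (\<Sum>t<n-s. d (a + (s + t)))"
    proof -
      have "0 \<in> {..<n-s}" using ns by simp
      then have ne: "{..<n-s} \<noteq> {}" by blast
      show ?thesis by (rule sum_pos[OF finite_lessThan ne]) (rule dpos)
    qed
    ultimately show ?thesis using dsum_a[of a] by simp
  qed
  have C1: "dcw (h (a mod n)) (h ((a + s) mod n)) = (\<Sum>t<s. d (a + t))" if "s \<le> k" for a s
    using that
  proof (induction s)
    case 0 then show ?case by simp
  next
    case (Suc s)
    have IH: "dcw (h (a mod n)) (h ((a + s) mod n)) = (\<Sum>t<s. d (a + t))" using Suc by simp
    have dd: "dcw (h ((a + s) mod n)) (h ((a + Suc s) mod n)) = d (a + s)" unfolding d_def by simp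
    have "(\<Sum>t<Suc s. d (a + t)) < 1" using partial Suc.prems by blast
    then have lt: "dcw (h (a mod n)) (h ((a + s) mod n)) + dcw (h ((a + s) mod n)) (h ((a + Suc s) mod n)) < 1"
      using IH dd by simp
    show ?case using dcw_add[OF lt] IH dd by simp
  qed
  define w where "w j = h ((j * k) mod n)" for j
  have wstep: "w (Suc j) \<in> Nplus E (w j)" for j
  proof -
    have "E (h ((j*k) mod n)) (h ((j*k + k) mod n))" using edge'[of k "j*k"] kn by simp
    then show ?thesis unfolding w_def Nplus_def by (simp add: add.commute)
  qed
  have wV: "w j \<in> V" for j
    using edge'[of k "j*k"] kn edgeV unfolding w_def by blast
  define f where "f j = dcw (w j) (w (Suc j))" for j
  have fC: "f j = (\<Sum>t<k. d (j*k + t))" for j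
    using C1[of k "j*k"] unfolding f_def w_def by (simp add: add.commute)
  have fper: "f (j + n) = f j" for j
  proof -
    have e1: "(j + n) * k = j*k + k*n" "Suc (j + n) * k = Suc j * k + k * n" by (simp_all add: algebra_simps)
    have "((j + n) * k) mod n = (j * k) mod n" "(Suc (j + n) * k) mod n = (Suc j * k) mod n"
      unfolding e1 by (simp_all only: mod_mult_self1)
    then show ?thesis unfolding f_def w_def by simp
  qed
  have fsum: "(\<Sum>j<n. f j) = real k"
  proof -
    have "(\<Sum>j<n. f j) = (\<Sum>i<n*k. d i)" unfolding fC by (rule sum_blocks[symmetric])
    also have "\<dots> = (\<Sum>i<k*n. d i)" by (simp add: mult.commute)
    also have "\<dots> = (\<Sum>j<k. \<Sum>t<n. d (j*n + t))" by (rule sum_blocks)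
    also have "\<dots> = (\<Sum>j<k. 1)" using sum_periodic[of d n] dper dsum by simp
    finally show ?thesis by simp
  qed
  have "(\<Sum>i<q*n. f i) = (\<Sum>b<q. \<Sum>t<n. f (b*n + t))" by (rule sum_blocks)
  also have "\<dots> = (\<Sum>b<q. real k)" using sum_periodic[of f n] fper fsum by simp
  finally have tot1: "(\<Sum>i<q*n. f i) = real q * real k" by simp
  have "(\<Sum>i<n*q. f i) = (\<Sum>b<n. \<Sum>t<q. f (b*q + t))" by (rule sum_blocks)
  also have "\<dots> \<le> (\<Sum>b<n. M)"
  proof (rule sum_mono)
    fix b assume "b \<in> {..<n}"
    have wk: "walk E q (w (b*q)) (\<lambda>i. w (b*q + i))" unfolding walk_def using wstep by simp
    have "(\<Sum>t<q. f (b*q + t)) = disp (\<lambda>i. w (b*q + i)) q" unfolding disp_def f_def by simp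
    also have "\<dots> \<le> gamma E q (w (b*q))" by (rule gamma_ge[OF wk])
    also have "\<dots> \<le> M" using bound wV by blast
    finally show "(\<Sum>t<q. f (b*q + t)) \<le> M" .
  qed
  finally have "(\<Sum>i<n*q. f i) \<le> real n * M" by simp
  then show ?thesis using tot1 by (simp add: mult.commute)
qed

end

context cgcq begin

lemma exists_a:
  assumes wfv: "wf V E = real p / real q" and q0: "q > 0" and v: "v \<in> V"
  shows "\<exists>a. frac a \<in> V \<and> a \<le> H a"
proof (rule ccontr)
  assume na: "\<not> ?thesis"
  have lt: "gamma E q y < real p" if "y \<in> V" for y
  proof -
    have "frac y = y" using inV[OF that] by (simp add: frac_eq_self)
    have "\<not> (frac y \<in> V \<and> y \<le> H y)" using na by blast
    then have "\<not> (y \<le> H y)" using that \<open>frac y = y\<close> by simp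
    then show ?thesis unfolding H_def Gam_def using \<open>frac y = y\<close> by simp
  qed
  define K where "K = lift V \<inter> {0..1}"
  have cK: "compact K" unfolding K_def by (intro closed_Int_compact clo compact_Icc)
  have vK: "v \<in> K" unfolding K_def using v inV[OF v] lift_iff' by (simp add: frac_eq_self)
  have coK: "continuous_on K (\<lambda>x. gamma E q (frac x))"
    using cont continuous_on_subset unfolding K_def by blast
  obtain x0 where x0: "x0 \<in> K" "\<And>y. y \<in> K \<Longrightarrow> gamma E q (frac y) \<le> gamma E q (frac x0)"
    using continuous_attains_sup[OF cK _ coK] vK by blast
  define M where "M = gamma E q (frac x0)"
  have M: "M < real p" unfolding M_def using lt x0(1) lift_iff' unfolding K_def by simp
  have M0: "0 \<le> M" unfolding M_def by (rule gamma_ge0)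
  have bound: "gamma E q y \<le> M" if "y \<in> V" for y
  proof -
    have "frac y = y" using inV[OF that] by (simp add: frac_eq_self)
    moreover have "y \<in> K" unfolding K_def using that inV[OF that] lift_iff' \<open>frac y = y\<close> by simp
    ultimately show ?thesis using x0(2)[of y] unfolding M_def by simp
  qed
  have "M / real q < wf V E" unfolding wfv using M q0 by (simp add: divide_strict_right_mono)
  then obtain W where W: "W \<subseteq> V" "finite W" "M / real q < wf_fin (induced E W)"
    using wf_gt by blast
  obtain n k h where hk: "cyc_hom n k (induced E W) h" "M / real q < real k / real n"
    using wf_fin_gt[OF W(3)] M0 q0 by auto
  have le: "real q * real k \<le> real n * M"
    by (rule hom_bound[OF hk(1)]) (auto simp: induced_def bound)
  have n0: "0 < n" using hk(1) by (auto simp: cyc_hom_def)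
  have "M * real n < real k * real q" using hk(2) q0 n0 by (simp add: field_simps)
  then show False using le by (simp add: algebra_simps)
qed

end


lemma int_shift_lemma:
  fixes \<tau> :: "int \<Rightarrow> int"
  assumes mono: "\<And>i j. i < j \<Longrightarrow> \<tau> i < \<tau> j" and surj: "\<And>j. \<exists>i. \<tau> i = j"
  shows "\<tau> i = i + \<tau> 0"
proof -
  have refl: "\<tau> a < \<tau> b \<Longrightarrow> a < b" for a b using mono by (metis not_less_iff_gr_or_eq)
  have step: "\<tau> (a + 1) = \<tau> a + 1" for a
  proof (rule ccontr)
    assume ne: "\<tau> (a + 1) \<noteq> \<tau> a + 1"
    have "\<tau> a < \<tau> (a + 1)" using mono by simp
    then have gt: "\<tau> a + 1 < \<tau> (a + 1)" using ne by simp
    obtain m where m: "\<tau> m = \<tau> a + 1" using surj by blast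
    have "a < m" using refl[of a m] m by simp
    moreover have "m < a + 1" using refl[of m "a+1"] m gt by simp
    ultimately show False by simp
  qed
  show ?thesis
  proof (induction i rule: int_induct[where k=0])
    case base then show ?case by simp
  next
    case (step1 i) then show ?case using step[of i] by simp
  next
    case (step2 i) then show ?case using step[of "i - 1"] by simp
  qed
qed

context cg begin

context
  assumes finV: "finite V"
begin

definition gam :: "real \<Rightarrow> real" where
  "gam z = Max (insert 0 ((\<lambda>u. dcw z u) ` {u. E z u}))"

definition G :: "real \<Rightarrow> real" where "G x = x + gam (frac x)"

lemma fin_out: "finite ((\<lambda>u. dcw z u) ` {u. E z u})"
proof -
  have "{u. E z u} \<subseteq> V" using edgeV by blast
  then show ?thesis using finV finite_subset by blast
qed

lemma gam_ge0: "0 \<le> gam z" unfolding gam_def using fin_out by simp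
lemma gam_lt1: "gam z < 1" unfolding gam_def using fin_out dcw_lt1 by simp
lemma gam_ge: "E z u \<Longrightarrow> dcw z u \<le> gam z" unfolding gam_def using fin_out by simp
lemma gam_att: "0 < gam z \<Longrightarrow> \<exists>u. E z u \<and> dcw z u = gam z"
proof -
  assume g: "0 < gam z"
  have "gam z \<in> insert 0 ((\<lambda>u. dcw z u) ` {u. E z u})" unfolding gam_def
    using fin_out by (intro Max_in) auto
  then show ?thesis using g by auto
qed

lemma G_ge: "x \<le> G x" unfolding G_def using gam_ge0 by simp
lemma G_lt1: "G x < x + 1" unfolding G_def using gam_lt1 by simp
lemma G_shift: "G (x + of_int k) = G x + of_int k" unfolding G_def by simp
lemma Giter_shift: "(G ^^ m) (x + of_int k) = (G ^^ m) x + of_int k"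
  by (induction m) (simp_all add: G_shift)

lemma G_step: "frac x \<in> V \<Longrightarrow> x < G x \<Longrightarrow> \<exists>u. E (frac x) u \<and> frac (G x) = u \<and> G x = x + dcw (frac x) u"
proof -
  assume x: "frac x \<in> V" and lt: "x < G x"
  then have "0 < gam (frac x)" unfolding G_def by simp
  then obtain u where u: "E (frac x) u" "dcw (frac x) u = gam (frac x)" using gam_att by blast
  have "u \<in> V" using u edgeV by blast
  then have "frac (x + dcw (frac x) u) = u" using inV by (intro frac_pos_step) auto
  then show ?thesis using u unfolding G_def by auto
qed

lemma G_in: "frac x \<in> V \<Longrightarrow> frac (G x) \<in> V"
proof -
  assume x: "frac x \<in> V"
  show ?thesis
  proof (cases "x < G x")
    case True then show ?thesis using G_step[OF x] edgeV by blast
  next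
    case False then have "G x = x" using G_ge by (meson antisym not_less)
    then show ?thesis using x by simp
  qed
qed

lemma Giter_in: "frac x \<in> V \<Longrightarrow> frac ((G ^^ m) x) \<in> V"
  by (induction m) (simp_all add: G_in)

lemma G_nplus: "frac X \<in> V \<Longrightarrow> u \<in> Nplus E (frac X) \<Longrightarrow> X + dcw (frac X) u \<le> G X"
  unfolding G_def Nplus_def using gam_ge gam_ge0 by auto

lemma G_mono:
  assumes X: "frac X \<in> V" and Y: "frac Y \<in> V" and XY: "X \<le> Y"
  shows "G X \<le> G Y"
proof (cases "X < G X")
  case False
  then show ?thesis using XY G_ge[of Y] by simp
next
  case True
  obtain u where u: "E (frac X) u" "G X = X + dcw (frac X) u" using G_step[OF X True] by blast
  have un: "u \<in> Nplus E (frac X)" using u by (simp add: Nplus_def)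
  note S = step_shift[OF X un Y XY]
  define t where "t = frac (max Y (X + dcw (frac X) u))"
  have tN: "t \<in> Nplus E (frac Y)" and te: "Y + dcw (frac Y) t = max Y (G X)"
    using S u(2) unfolding t_def by auto
  have "Y + dcw (frac Y) t \<le> G Y" using G_nplus[OF Y tN] .
  then show ?thesis using te by simp
qed

lemma G_walk:
  assumes w: "walk E m (frac X) w" and X: "frac X \<in> V"
  shows "X + disp w m \<le> (G ^^ m) X"
proof -
  have "i \<le> m \<Longrightarrow> X + disp w i \<le> (G ^^ i) X" for i
  proof (induction i)
    case 0 then show ?case by simp
  next
    case (Suc i)
    define Q where "Q = X + disp w i"
    have fQ: "frac Q = w i" unfolding Q_def using walk_pos[OF w X] Suc.prems by simp
    have QV: "frac Q \<in> V" using fQ walk_V[OF w X] Suc.prems by simp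
    have wn: "w (Suc i) \<in> Nplus E (frac Q)" using w Suc.prems fQ by (simp add: walk_def)
    have "X + disp w (Suc i) = Q + dcw (frac Q) (w (Suc i))" unfolding Q_def using fQ Q_def
      by (simp add: disp_Suc)
    also have "\<dots> \<le> G Q" by (rule G_nplus[OF QV wn])
    also have "\<dots> \<le> G ((G ^^ i) X)" using G_mono[OF QV Giter_in[OF X]] Suc by (simp add: Q_def)
    finally show ?case by simp
  qed
  then show ?thesis by simp
qed


lemma G_good:
  assumes good: "\<And>z. z \<in> V \<Longrightarrow> \<exists>w. walk E q z w \<and> real p < disp w q"
    and x: "frac x \<in> V"
  shows "x + real p < (G ^^ q) x"
proof -
  obtain w where w: "walk E q (frac x) w" "real p < disp w q" using good x by blast
  show ?thesis using G_walk[OF w(1) x] w(2) by simp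
qed

lemma G_goodj:
  assumes good: "\<And>z. z \<in> V \<Longrightarrow> \<exists>w. walk E q z w \<and> real p < disp w q"
    and x: "frac x \<in> V" and j: "1 \<le> j"
  shows "x + real j * real p < (G ^^ (j*q)) x"
  using j
proof (induction j)
  case 0 then show ?case by simp
next
  case (Suc j)
  show ?case
  proof (cases "j = 0")
    case True then show ?thesis using G_good[OF good x] by simp
  next
    case False
    then have IH: "x + real j * real p < (G ^^ (j*q)) x" using Suc by simp
    have "(G ^^ (Suc j * q)) x = (G ^^ q) ((G ^^ (j*q)) x)" by (simp add: funpow_add)
    moreover have "(G ^^ (j*q)) x + real p < (G ^^ q) ((G ^^ (j*q)) x)"
      by (rule G_good[OF good Giter_in[OF x]])
    ultimately show ?thesis using IH by (simp add: algebra_simps)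
  qed
qed

lemma periodic_point:
  assumes ne: "V \<noteq> {}"
  shows "\<exists>Z P R. frac Z \<in> V \<and> 0 < P \<and> (G ^^ P) Z = Z + of_int R"
proof -
  obtain x0 where x0: "x0 \<in> V" using ne by blast
  have fx0: "frac x0 \<in> V" using x0 inV[OF x0] by (simp add: frac_eq_self)
  define \<phi> where "\<phi> i = frac ((G ^^ i) x0)" for i
  have "\<phi> ` {..card V} \<subseteq> V" unfolding \<phi>_def using Giter_in[OF fx0] by auto
  then have "card (\<phi> ` {..card V}) \<le> card V" using finV by (simp add: card_mono)
  then have "\<not> inj_on \<phi> {..card V}" using pigeonhole[of \<phi> "{..card V}"] by simp
  then obtain i j where ij: "i \<in> {..card V}" "j \<in> {..card V}" "i \<noteq> j" "\<phi> i = \<phi> j"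
    unfolding inj_on_def by blast
  obtain a b where ab: "a < b" "\<phi> a = \<phi> b"
  proof (cases "i < j")
    case True then show ?thesis using that ij by blast
  next
    case False then have "j < i" using ij by simp
    then show ?thesis using that ij by metis
  qed
  define Z where "Z = (G ^^ a) x0"
  have e: "(G ^^ (b - a)) Z = (G ^^ b) x0" unfolding Z_def using ab
    by (metis funpow_add le_add_diff_inverse2 less_imp_le comp_apply)
  obtain R where "(G ^^ b) x0 = Z + of_int R"
    using ab(2) frac_eq_iff_diff_int unfolding \<phi>_def Z_def by metis
  then show ?thesis using e ab Giter_in[OF fx0] unfolding Z_def by (intro exI[of _ "(G ^^ a) x0"] exI[of _ "b - a"] exI[of _ R]) auto
qed


lemma finite_hom:
  assumes good: "\<And>z. z \<in> V \<Longrightarrow> \<exists>w. walk E q z w \<and> real p < disp w q"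
    and ne: "V \<noteq> {}" and q0: "0 < q"
  shows "\<exists>n k h. cyc_hom n k E h \<and> real p / real q < real k / real n"
proof -
  obtain Z P R where ZV: "frac Z \<in> V" and P0: "0 < P" and ZP: "(G ^^ P) Z = Z + of_int R"
    using periodic_point[OF ne] by blast
  define A where "A = (\<lambda>i. frac ((G ^^ i) Z)) ` {..<P}"
  have finA: "finite A" unfolding A_def by simp
  have AV: "A \<subseteq> V" unfolding A_def using Giter_in[OF ZV] by auto
  have A01: "a \<in> A \<Longrightarrow> 0 \<le> a \<and> a < 1" for a using AV inV by blast
  define L where "L = {x. frac x \<in> A}"
  have Lmem: "i < P \<Longrightarrow> (G ^^ i) Z + of_int k \<in> L" for i k unfolding L_def A_def by auto
  have Lrep: "x \<in> L \<Longrightarrow> \<exists>i k. i < P \<and> x = (G ^^ i) Z + of_int k" for x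
  proof -
    assume "x \<in> L"
    then obtain i where i: "i < P" "frac x = frac ((G ^^ i) Z)" unfolding L_def A_def by auto
    then obtain k where "x = (G ^^ i) Z + of_int k" using frac_eq_iff_diff_int by blast
    then show ?thesis using i by blast
  qed
  have LV: "x \<in> L \<Longrightarrow> frac x \<in> V" for x unfolding L_def using AV by blast
  have comm: "(G ^^ a) ((G ^^ b) y) = (G ^^ b) ((G ^^ a) y)" for a b y
    by (metis add.commute comp_apply funpow_add)
  have GPL: "x \<in> L \<Longrightarrow> (G ^^ P) x = x + of_int R" for x
  proof -
    assume "x \<in> L"
    then obtain i k where ik: "x = (G ^^ i) Z + of_int k" using Lrep by blast
    have "(G ^^ P) x = (G ^^ P) ((G ^^ i) Z) + of_int k" unfolding ik by (rule Giter_shift)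
    also have "(G ^^ P) ((G ^^ i) Z) = (G ^^ i) ((G ^^ P) Z)" by (rule comm)
    also have "\<dots> = (G ^^ i) (Z + of_int R)" using ZP by simp
    also have "\<dots> = (G ^^ i) Z + of_int R" by (rule Giter_shift)
    finally show ?thesis unfolding ik by simp
  qed
  have GL: "x \<in> L \<Longrightarrow> G x \<in> L" for x
  proof -
    assume "x \<in> L"
    then obtain i k where ik: "i < P" "x = (G ^^ i) Z + of_int k" using Lrep by blast
    have Gx: "G x = (G ^^ Suc i) Z + of_int k" unfolding ik(2) G_shift by simp
    show ?thesis
    proof (cases "Suc i < P")
      case True then show ?thesis using Gx Lmem[OF True, of k] by simp
    next
      case False
      then have "Suc i = P" using ik by simp
      then have "G x = (G ^^ 0) Z + of_int (R + k)" using Gx ZP by simp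
      then show ?thesis using Lmem[OF P0, of "R + k"] by simp
    qed
  qed
  have Gsurj: "y \<in> L \<Longrightarrow> \<exists>x\<in>L. G x = y" for y
  proof -
    assume "y \<in> L"
    then obtain i k where ik: "i < P" "y = (G ^^ i) Z + of_int k" using Lrep by blast
    show ?thesis
    proof (cases i)
      case 0
      have e1: "G ((G ^^ (P - 1)) Z + of_int (k - R)) = G ((G ^^ (P - 1)) Z) + of_int (k - R)"
        by (rule G_shift)
      have e2: "G ((G ^^ (P - 1)) Z) = (G ^^ P) Z"
      proof -
        have "(G ^^ P) Z = (G ^^ Suc (P - 1)) Z" using P0 by simp
        then show ?thesis by simp
      qed
      have "G ((G ^^ (P - 1)) Z + of_int (k - R)) = (G ^^ P) Z + of_int (k - R)"
        unfolding e1 e2 ..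
      also have "\<dots> = y" using ZP ik 0 by simp
      finally have "G ((G ^^ (P - 1)) Z + of_int (k - R)) = y" .
      moreover have "(G ^^ (P - 1)) Z + of_int (k - R) \<in> L" using Lmem[of "P - 1" "k - R"] P0 by simp
      ultimately show ?thesis by blast
    next
      case (Suc j)
      have "G ((G ^^ j) Z + of_int k) = y" using ik Suc by (simp add: G_shift)
      then show ?thesis using Lmem[of j] ik Suc by auto
    qed
  qed
  have Gstrict: "x \<in> L \<Longrightarrow> y \<in> L \<Longrightarrow> x < y \<Longrightarrow> G x < G y" for x y
  proof -
    assume xy: "x \<in> L" "y \<in> L" "x < y"
    have le: "G x \<le> G y" using G_mono[OF LV LV] xy by simp
    have "G x \<noteq> G y"
    proof
      assume eq: "G x = G y"
      have PS: "P = Suc (P - 1)" using P0 by simp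
      have "(G ^^ P) x = (G ^^ (P - 1)) (G x)" "(G ^^ P) y = (G ^^ (P - 1)) (G y)"
        by (subst PS, simp only: funpow_Suc_right comp_apply)+
      then have "x + of_int R = y + of_int R" using GPL xy eq by simp
      then show False using xy by simp
    qed
    then show ?thesis using le by simp
  qed
  define n where "n = card A"
  have ZA: "frac Z \<in> A" unfolding A_def using P0 by force
  have n0: "0 < n" unfolding n_def using finA ZA card_gt_0_iff by blast
  define as where "as = sorted_list_of_set A"
  have las: "length as = n" unfolding as_def n_def by simp
  have sas: "sorted_wrt (<) as" unfolding as_def by simp
  have setas: "set as = A" unfolding as_def using finA by simp
  have asA: "r < n \<Longrightarrow> as ! r \<in> A" for r using setas las nth_mem by blast
  define e where "e i = as ! nat (i mod int n) + of_int (i div int n)" for i :: int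
  have modn: "nat (i mod int n) < n" for i using n0 by (simp add: nat_less_iff)
  have efrac: "frac (e i) = as ! nat (i mod int n)" for i
    unfolding e_def using A01[OF asA[OF modn]] by (simp add: frac_eq_self)
  have eL: "e i \<in> L" for i unfolding L_def using efrac asA modn by simp
  have estrict: "i < j \<Longrightarrow> e i < e j" for i j
  proof -
    assume ij: "i < j"
    have dle: "i div int n \<le> j div int n" using ij n0 by (intro zdiv_mono1) auto
    show ?thesis
    proof (cases "i div int n = j div int n")
      case True
      have ei: "i = int n * (i div int n) + i mod int n" by simp
      have ej: "j = int n * (i div int n) + j mod int n" using True by simp
      have "i mod int n < j mod int n" using ei ej ij by linarith
      moreover have "0 \<le> i mod int n" using n0 by simp
      ultimately have lt: "nat (i mod int n) < nat (j mod int n)" by (simp add: nat_less_eq_zless)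
      have "as ! nat (i mod int n) < as ! nat (j mod int n)"
        using sorted_wrt_nth_less[OF sas lt] modn[of j] las by simp
      then show ?thesis unfolding e_def using True by simp
    next
      case False
      then have "i div int n + 1 \<le> j div int n" using dle by simp
      moreover have "as ! nat (i mod int n) < 1" "0 \<le> as ! nat (j mod int n)"
        using A01[OF asA[OF modn]] by auto
      ultimately show ?thesis unfolding e_def by linarith
    qed
  qed
  have erefl: "e i < e j \<Longrightarrow> i < j" for i j using estrict by (metis not_less_iff_gr_or_eq)
  have einj: "e i = e j \<Longrightarrow> i = j" for i j using estrict by (metis less_irrefl not_less_iff_gr_or_eq)
  have esurj: "x \<in> L \<Longrightarrow> \<exists>i. e i = x" for x
  proof -
    assume "x \<in> L"
    then have "frac x \<in> set as" unfolding L_def setas by simp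
    then obtain r where r: "r < n" "as ! r = frac x" using las by (auto simp: in_set_conv_nth)
    define i where "i = floor x * int n + int r"
    have "i mod int n = int r" unfolding i_def using r by simp
    moreover have "i div int n = floor x" unfolding i_def using r by simp
    ultimately have "e i = frac x + of_int (floor x)" unfolding e_def using r by simp
    then have "e i = x" by (simp add: frac_def)
    then show ?thesis by blast
  qed
  have eshift: "e (i + int n * t) = e i + of_int t" for i t
  proof -
    have "(i + int n * t) mod int n = i mod int n" by simp
    moreover have "(i + int n * t) div int n = i div int n + t" using n0 by simp
    ultimately show ?thesis unfolding e_def by simp
  qed
  define tau where "tau i = (SOME j. e j = G (e i))" for i
  have tauE: "e (tau i) = G (e i)" for i
    unfolding tau_def using esurj[OF GL[OF eL]] by (metis (mono_tags, lifting) someI_ex)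
  have taumono: "i < j \<Longrightarrow> tau i < tau j" for i j
  proof -
    assume "i < j"
    then have "e i < e j" by (rule estrict)
    then have "G (e i) < G (e j)" by (rule Gstrict[OF eL eL])
    then have "e (tau i) < e (tau j)" using tauE by simp
    then show ?thesis by (rule erefl)
  qed
  have tausurj: "\<exists>i. tau i = j" for j
  proof -
    obtain x where x: "x \<in> L" "G x = e j" using Gsurj[OF eL] by blast
    obtain i where "e i = x" using esurj x by blast
    then have "e (tau i) = e j" using tauE x by simp
    then show ?thesis using einj by blast
  qed
  define c where "c = tau 0"
  have Gc: "G (e i) = e (i + c)" for i
  proof -
    have "tau i = i + tau 0" by (rule int_shift_lemma[OF taumono tausurj])
    then show ?thesis using tauE[of i] unfolding c_def by simp
  qed
  have Gite: "(G ^^ m) (e i) = e (i + int m * c)" for m i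
    by (induction m) (simp_all add: Gc algebra_simps)
  have ZL: "Z \<in> L" using Lmem[OF P0, of 0] by simp
  obtain i0 where i0: "e i0 = Z" using esurj[OF ZL] by blast
  have "e (i0 + int P * c) = e (i0 + int n * R)" using Gite[of P i0] i0 ZP eshift by simp
  then have "i0 + int P * c = i0 + int n * R" by (rule einj)
  then have PcnR: "int P * c = int n * R" by simp
  have idx1: "int (P*q) * c = int q * (int P * c)" by (simp add: algebra_simps)
  have idx: "int (P*q) * c = int n * (int q * R)" unfolding idx1 PcnR by (simp add: algebra_simps)
  have "Z + real P * real p < (G ^^ (P*q)) Z" using G_goodj[OF good ZV, of P] P0 by simp
  also have "(G ^^ (P*q)) Z = e (i0 + int (P*q) * c)" using Gite[of "P*q" i0] i0 by simp
  also have "\<dots> = e (i0 + int n * (int q * R))" unfolding idx ..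
  also have "\<dots> = Z + of_int (int q * R)" using eshift i0 by simp
  finally have "real P * real p < of_int (int q * R)" by simp
  then have "real_of_int (int P * int p) < real_of_int (int q * R)" by simp
  then have PpqR: "int P * int p < int q * R" by (simp only: of_int_less_iff)
  have "0 \<le> int P * int p" by simp
  then have "0 < int q * R" using PpqR by linarith
  then have R0: "0 < R" using q0 by (simp add: zero_less_mult_iff)
  have "0 < int n * R" using R0 n0 by simp
  then have "0 < int P * c" using PcnR by simp
  then have c0: "0 < c" using P0 by (simp add: zero_less_mult_iff)
  have cn: "c < int n"
  proof -
    have "e c = G (e 0)" using Gc[of 0] by simp
    also have "\<dots> < e 0 + 1" by (rule G_lt1)
    also have "\<dots> = e (int n)" using eshift[of 0 1] by simp
    finally show ?thesis using erefl by blast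
  qed
  have ratio: "int n * int p < c * int q"
  proof -
    have "int P * (int n * int p) < int P * (c * int q)"
    proof -
      have "int P * (int n * int p) = int n * (int P * int p)" by (simp add: algebra_simps)
      also have "\<dots> < int n * (int q * R)" using PpqR n0 by simp
      also have "\<dots> = int q * (int n * R)" by (simp add: algebra_simps)
      also have "\<dots> = int P * (c * int q)" using PcnR by (simp add: algebra_simps)
      finally show ?thesis .
    qed
    then show ?thesis using P0 by simp
  qed
  have two: "2 * c < int n"
  proof (rule ccontr)
    assume "\<not> 2 * c < int n"
    then have big: "int n \<le> 2 * c" by simp
    define x0 where "x0 = e 0"
    define y1 where "y1 = e c"
    define y2 where "y2 = e (2 * c)"
    have Gy0: "G x0 = y1" unfolding x0_def y1_def using Gc[of 0] by simp
    have Gy1: "G y1 = y2" unfolding y1_def y2_def using Gc[of c] by simp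
    have x0y1: "x0 < y1" unfolding x0_def y1_def using estrict c0 by simp
    have y1y2: "y1 < y2" unfolding y1_def y2_def using estrict c0 by simp
    have y2ge: "x0 + 1 \<le> y2"
    proof -
      have "x0 + 1 = e (int n)" unfolding x0_def using eshift[of 0 1] by simp
      also have "\<dots> \<le> y2" unfolding y2_def using estrict big by (cases "int n = 2*c") (auto intro: less_imp_le)
      finally show ?thesis .
    qed
    have y1lt: "y1 < x0 + 1" using G_lt1[of x0] Gy0 by simp
    have y2lt: "y2 < y1 + 1" using G_lt1[of y1] Gy1 by simp
    have x0V: "frac x0 \<in> V" unfolding x0_def using LV eL by blast
    have y1V: "frac y1 \<in> V" unfolding y1_def using LV eL by blast
    obtain u1 where u1: "E (frac x0) u1" "frac (G x0) = u1" using G_step[OF x0V] x0y1 Gy0 by blast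
    obtain u2 where u2: "E (frac y1) u2" "frac (G y1) = u2" using G_step[OF y1V] y1y2 Gy1 by blast
    have E01: "E (frac x0) (frac y1)" using u1 Gy0 by simp
    have E12: "E (frac y1) (frac y2)" using u2 Gy1 by simp
    have "E (frac y1) (frac x0)"
    proof (cases "y2 = x0 + 1")
      case True
      then have "frac y2 = frac x0" using frac_shift_int[of x0 1] by simp
      then show ?thesis using E12 by simp
    next
      case False
      then have lt: "x0 + 1 < y2" using y2ge by simp
      have d1: "dcw (frac y1) (frac (x0 + 1)) = x0 + 1 - y1" using y1lt x0y1 by (intro dcw_lift_eq) auto
      have f1: "frac (x0 + 1) = frac x0" using frac_shift_int[of x0 1] by simp
      have d2: "dcw (frac y1) (frac y2) = y2 - y1" using y1y2 y2lt by (intro dcw_lift_eq) auto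
      have "cbetween (frac y1) (frac x0) (frac y2)"
        unfolding cbetween_def using d1 d2 f1 y1lt lt by simp
      then show ?thesis using cyc_rule E12 x0V by blast
    qed
    then show False using E01 noopp by blast
  qed
  define k where "k = nat c"
  have kc: "int k = c" unfolding k_def using c0 by simp
  define h where "h i = as ! i" for i
  have eI: "e (int i) = as ! i" if "i < n" for i
    unfolding e_def using that by simp
  have fracI: "frac (e (int j)) = as ! (j mod n)" for j
    using efrac[of "int j"] by (simp add: zmod_int[symmetric])
  have edges: "E (h i) (h ((i + s) mod n))" if i: "i < n" and s: "1 \<le> s" "s \<le> k" for i s
  proof -
    define I where "I = int i"
    have IV: "frac (e I) \<in> V" using LV eL by blast
    have fI: "frac (e I) = h i" unfolding I_def h_def using fracI[of i] i by simp
    have lt1: "e I < e (I + int s)" using estrict s by simp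
    have le2: "e (I + int s) \<le> e (I + c)" using estrict s kc by (cases "int s = c") (auto intro: less_imp_le)
    have GI: "G (e I) = e (I + c)" by (rule Gc)
    have lt3: "e I < G (e I)" using GI estrict c0 by simp
    obtain u where u: "E (frac (e I)) u" "frac (G (e I)) = u" "G (e I) = e I + dcw (frac (e I)) u"
      using G_step[OF IV lt3] by blast
    have fs: "frac (e (I + int s)) = h ((i + s) mod n)"
      unfolding I_def h_def using fracI[of "i + s"] by simp
    show ?thesis
    proof (cases "int s = c")
      case True
      then show ?thesis using u fI fs GI by simp
    next
      case False
      then have lt4: "e (I + int s) < G (e I)" using GI estrict s kc by simp
      have d1: "dcw (frac (e I)) (frac (e (I + int s))) = e (I + int s) - e I"
        using lt1 lt4 G_lt1[of "e I"] by (intro dcw_lift_eq) auto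
      have "cbetween (frac (e I)) (frac (e (I + int s))) u"
        unfolding cbetween_def using d1 lt1 lt4 u(3) by simp
      moreover have "frac (e (I + int s)) \<in> V" using LV eL by blast
      ultimately have "E (frac (e I)) (frac (e (I + int s)))" using cyc_rule u(1) by blast
      then show ?thesis using fI fs by simp
    qed
  qed
  have n1: "1 < n" using two c0 by simp
  have sumeq: "(\<Sum>i<n. dcw (h i) (h ((i + 1) mod n))) = 1"
  proof -
    have "(\<Sum>i<n. dcw (h i) (h ((i + 1) mod n))) = (\<Sum>i<n. e (int (Suc i)) - e (int i))"
    proof (rule sum.cong)
      fix i assume "i \<in> {..<n}"
      then have i: "i < n" by simp
      have a: "h i = frac (e (int i))" unfolding h_def using fracI[of i] i by simp
      have b: "h ((i + 1) mod n) = frac (e (int (Suc i)))" unfolding h_def using fracI[of "Suc i"] by simp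
      have "e (int (Suc i)) < e (int i + int n)" using estrict n1 by simp
      also have "\<dots> = e (int i) + 1" using eshift[of "int i" 1] by simp
      finally have "e (int (Suc i)) - e (int i) < 1" by simp
      moreover have "e (int i) < e (int (Suc i))" using estrict by simp
      ultimately show "dcw (h i) (h ((i + 1) mod n)) = e (int (Suc i)) - e (int i)"
        unfolding a b by (intro dcw_lift_eq) auto
    qed simp
    also have "\<dots> = e (int n) - e (int 0)" by (rule sum_lessThan_telescope[of "\<lambda>j. e (int j)" n])
    also have "e (int n) = e 0 + 1" using eshift[of 0 1] by simp
    finally show ?thesis by simp
  qed
  have k1: "1 \<le> k" unfolding k_def using c0 by simp
  have "int (2 * k) < int n" using kc two by simp
  then have k2: "2 * k < n" by (simp only: of_nat_less_iff)
  have hom: "cyc_hom n k E h"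
    unfolding cyc_hom_def using k1 k2 edges sumeq by auto
  have "real p / real q < real k / real n"
  proof -
    have "real_of_int (int n * int p) < real_of_int (c * int q)" using ratio by (simp only: of_int_less_iff)
    then have "real n * real p < real k * real q" using kc by (metis of_int_mult of_int_of_nat_eq)
    then show ?thesis using q0 n0 by (simp add: field_simps)
  qed
  then show ?thesis using hom by blast
qed

end
end


context cg begin

lemma cyclic_induced: "W \<subseteq> V \<Longrightarrow> cyclic_graph W (induced E W)"
  unfolding cyclic_graph_def digraph_on_def induced_def
  using Vsub noloop noopp cyc_rule by blast

lemma walk_induced:
  assumes "walk E m z w" "\<And>i. i \<le> m \<Longrightarrow> w i \<in> W"
  shows "walk (induced E W) m z w"
  using assms unfolding walk_def Nplus_def induced_def by auto

end

context cgcq begin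

lemma exists_b:
  assumes wfv: "wf V E = real p / real q" and q0: "q > 0" and v: "v \<in> V"
  shows "\<exists>b. frac b \<in> V \<and> H b \<le> b"
proof (rule ccontr)
  assume na: "\<not> ?thesis"
  have gt: "real p < gamma E q y" if "y \<in> V" for y
  proof -
    have fy: "frac y = y" using inV[OF that] by (simp add: frac_eq_self)
    have "\<not> (frac y \<in> V \<and> H y \<le> y)" using na by blast
    then have "\<not> (H y \<le> y)" using that fy by simp
    then show ?thesis unfolding H_def Gam_def using fy by simp
  qed
  define K where "K = lift V \<inter> {0..1}"
  have cK: "compact K" unfolding K_def by (intro closed_Int_compact clo compact_Icc)
  have vK: "v \<in> K" unfolding K_def using v inV[OF v] lift_iff' by (simp add: frac_eq_self)
  have coK: "continuous_on K (\<lambda>x. gamma E q (frac x))"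
    using cont continuous_on_subset unfolding K_def by blast
  obtain x0 where x0: "x0 \<in> K" "\<And>y. y \<in> K \<Longrightarrow> gamma E q (frac x0) \<le> gamma E q (frac y)"
    using continuous_attains_inf[OF cK _ coK] vK by blast
  define \<delta> where "\<delta> = gamma E q (frac x0) - real p"
  have d0: "0 < \<delta>" unfolding \<delta>_def using gt x0(1) lift_iff' unfolding K_def by simp
  have bound: "real p + \<delta> \<le> gamma E q y" if "y \<in> V" for y
  proof -
    have fy: "frac y = y" using inV[OF that] by (simp add: frac_eq_self)
    moreover have "y \<in> K" unfolding K_def using that inV[OF that] lift_iff' fy by simp
    ultimately show ?thesis using x0(2)[of y] unfolding \<delta>_def by simp
  qed
  obtain N :: nat where N: "0 < N" "inverse (real N) < \<delta> / 2"
    using ex_inverse_of_nat_less[of "\<delta>/2"] d0 by auto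
  define C where "C j = lift V \<inter> {real j / real N .. (real j + 1) / real N}" for j :: nat
  define J where "J = {j. j < N \<and> V \<inter> C j \<noteq> {}}"
  define Y where "Y = (\<lambda>j. Inf (C j)) ` J"
  have finY: "finite Y" unfolding Y_def J_def by simp
  have cover: "\<exists>y\<in>Y. y \<le> z \<and> z < y + inverse (real N)" if z: "z \<in> V" for z
  proof -
    have z01: "0 \<le> z" "z < 1" using inV[OF z] by auto
    define j where "j = nat (floor (z * real N))"
    have fl: "real j \<le> z * real N" "z * real N < real j + 1" unfolding j_def using z01 N(1)
      by (simp_all add: of_nat_nat)
    have jN: "j < N"
    proof -
      have "z * real N < real N" using z01 N(1) by simp
      then have "real j < real N" using fl by linarith
      then show ?thesis by simp
    qed
    have zl: "real j / real N \<le> z" "z \<le> (real j + 1) / real N" using fl N(1)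
      by (simp_all add: field_simps)
    have zC: "z \<in> C j" unfolding C_def using zl z lift_iff' inV[OF z] by (simp add: frac_eq_self)
    then have jJ: "j \<in> J" unfolding J_def using jN z by blast
    have clC: "closed (C j)" unfolding C_def by (intro closed_Int clo closed_atLeastAtMost)
    have bbC: "bdd_below (C j)" unfolding C_def by (intro bdd_belowI[where m="real j / real N"]) auto
    have inC: "Inf (C j) \<in> C j" using closed_contains_Inf[OF _ bbC clC] zC by blast
    have le: "Inf (C j) \<le> z" using cInf_lower[OF zC bbC] .
    have ge: "real j / real N \<le> Inf (C j)" using inC unfolding C_def by simp
    have "z < (real j + 1) / real N" using fl N(1) by (simp add: field_simps)
    also have "\<dots> = real j / real N + inverse (real N)" by (simp add: divide_inverse distrib_right)
    finally have "z < Inf (C j) + inverse (real N)" using ge by simp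
    moreover have "Inf (C j) \<in> Y" unfolding Y_def using jJ by blast
    ultimately show ?thesis using le by blast
  qed
  have YV: "Y \<subseteq> V"
  proof
    fix y assume "y \<in> Y"
    then obtain j where j: "j \<in> J" "y = Inf (C j)" unfolding Y_def by blast
    obtain z where z: "z \<in> V" "z \<in> C j" using j(1) unfolding J_def by blast
    have clC: "closed (C j)" unfolding C_def by (intro closed_Int clo closed_atLeastAtMost)
    have bbC: "bdd_below (C j)" unfolding C_def by (intro bdd_belowI[where m="real j / real N"]) auto
    have inC: "y \<in> C j" using closed_contains_Inf[OF _ bbC clC] z j by blast
    have "y \<le> z" using cInf_lower[OF z(2) bbC] j by simp
    moreover have "0 \<le> y" using inC N(1) unfolding C_def by (auto intro: order_trans[rotated])
    moreover have "z < 1" using inV[OF z(1)] by simp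
    moreover have "frac y \<in> V" using inC lift_iff' unfolding C_def by simp
    ultimately show "y \<in> V" by (simp add: frac_eq_self)
  qed
  have "\<forall>y\<in>Y. \<exists>w. walk E q y w \<and> real p + \<delta>/2 < disp w q"
  proof
    fix y assume "y \<in> Y"
    then have "real p + \<delta> \<le> gamma E q y" using bound YV by blast
    moreover obtain w where "walk E q y w" "gamma E q y - \<delta>/2 < disp w q"
      using gamma_approx[where e="\<delta>/2" and E=E and m=q and v=y] d0 by auto
    ultimately show "\<exists>w. walk E q y w \<and> real p + \<delta>/2 < disp w q" by auto
  qed
  then obtain wk where wk: "\<And>y. y \<in> Y \<Longrightarrow> walk E q y (wk y) \<and> real p + \<delta>/2 < disp (wk y) q"
    by metis
  define W where "W = (\<Union>y\<in>Y. wk y ` {..q})"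
  have finW: "finite W" unfolding W_def using finY by simp
  have WV: "W \<subseteq> V" unfolding W_def using wk YV walk_V by blast
  have YW: "Y \<subseteq> W" unfolding W_def using wk by (force simp: walk_def)
  interpret CW: cg W "induced E W" by unfold_locales (rule cyclic_induced[OF WV])
  have good: "\<exists>w. walk (induced E W) q z w \<and> real p < disp w q" if z: "z \<in> W" for z
  proof -
    have zV: "z \<in> V" using z WV by blast
    obtain y where y: "y \<in> Y" "y \<le> z" "z < y + inverse (real N)" using cover[OF zV] by blast
    have fy: "frac y = y" using inV YV y(1) by (simp add: subset_eq frac_eq_self)
    have fz: "frac z = z" using inV[OF zV] by (simp add: frac_eq_self)
    have wi: "walk (induced E W) q y (wk y)"
      using walk_induced[of q y "wk y" W] wk[OF y(1)] unfolding W_def using y(1) by blast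
    obtain w' where w': "walk (induced E W) q (frac z) w'" "z + disp w' q = max z (y + disp (wk y) q)"
      using CW.maxwalk[of q y "wk y" z] wi fy fz z y(1) YW y(2) by auto
    have "y + disp (wk y) q > y + real p + \<delta> / 2" using wk[OF y(1)] by simp
    then have "z + disp w' q > z + real p" using w'(2) y(3) N(2) by (simp add: max_def split: if_splits)
    then show ?thesis using w'(1) fz by auto
  qed
  have neW: "W \<noteq> {}" using cover[OF v] YW by blast
  obtain n k h where hk: "cyc_hom n k (induced E W) h" "real p / real q < real k / real n"
    using CW.finite_hom[OF finW good neW q0] by blast
  have "real k / real n \<le> wf V E" by (rule order_trans[OF wf_fin_ge[OF hk(1)] wf_ge[OF WV finW]])
  then show False using hk(2) wfv by simp
qed

end

theorem mainTheorem20: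
  fixes V :: "real set" and E :: "real \<Rightarrow> real \<Rightarrow> bool" and p q :: nat
  assumes "cyclic_graph V E" and "closed_circ V" and "continuous_graph V E"
    and "q > 0" and "coprime p q" and "wf V E = real p / real q"
  shows "\<forall>v\<in>V. \<forall>i::nat.
           vstar E q (fmap E i v) = fmap E i (vstar E q v) \<and>
           (fmap E i (vstar E q v) = vstar E q v \<longleftrightarrow> q dvd i)"
proof -
  interpret C: cgcq V E p q
  proof
    show "cyclic_graph V E" by fact
    show "closed (lift V)" using assms(2) by (simp add: closed_circ_def)
    show "\<And>m. continuous_on (lift V) (\<lambda>x. gamma E m (frac x))"
      using assms(3) by (simp add: continuous_graph_def)
  qed
  show ?thesis
  proof (intro ballI allI)
    fix v i assume v: "v \<in> V"
    show "vstar E q (fmap E i v) = fmap E i (vstar E q v) \<and>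
          (fmap E i (vstar E q v) = vstar E q v \<longleftrightarrow> q dvd i)"
      by (rule C.main_given[OF C.exists_a[OF assms(6,4) v] C.exists_b[OF assms(6,4) v] assms(5) v])
  qed
qed


end
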